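(* Let $\omega=(\tilde\omega,\omega_d)\in\mathbb R^d$, $d\geq3$, be non-resonant with $\tilde\omega\in\mathbb R^{d-1}$ such that there is a sequence $\{\bar k_j\}\subset\mathbb Z^{d-1}$ with $\lim_{j\to\infty}\frac{\ln|\langle\tilde\omega,\bar k_j\rangle|}{\|\bar k_j\|}=-\infty$. There exists a real entire Hamiltonian $H$ on $\mathbb{T}^d\times\mathbb R^d$ of the form $H(\theta,r)=\langle\omega,r\rangle+\mathcal O(r^2)$ such that for every $(\theta,r)\in\mathbb{T}^d\times\mathbb R^d$ with $r_d\neq0$, $\limsup_{t\to\infty}|\Phi^t_H(\theta,r)|=\infty$. The Birkhoff normal form of $H$ at $\mathcal{T}_0=\mathbb{T}^d\times\{0\}$ is $N(r)=\langle\omega,r\rangle$.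
   Context: $\|k\|=\max_m|k_m|$; non-resonant means rationally independent coordinates. Real entire: extends holomorphically to $(\mathbb C/\mathbb Z)^d\times\mathbb C^d$, real on real arguments. $\Phi^t_H$ is the Hamiltonian flow for $d\theta\wedge dr$. Birkhoff normal form: formal power series $N_H(r)$ such that some formal series $f(\theta,r)=\sum_j a_j(\theta)r^j=\mathcal O(r^2)$ with coefficients real analytic near $\mathbb{T}^d$ satisfies $H(\theta,r+\partial_\theta f(\theta,r))=N_H(r)$. *)

theory Defs
  imports "HOL-Analysis.Analysis"
begin

definition cvec :: "real^'n \<Rightarrow> complex^'n" where
  "cvec x = (\<chi> i. complex_of_real (x $ i))"

definition cmul :: "complex \<Rightarrow> complex^'n \<Rightarrow> complex^'n" where
  "cmul c z = (\<chi> i. c * z $ i)"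

definition holo_on_vec :: "(complex^'n \<Rightarrow> complex) \<Rightarrow> (complex^'n) set \<Rightarrow> bool" where
  "holo_on_vec F U \<longleftrightarrow> (\<forall>z\<in>U. \<exists>L. (F has_derivative L) (at z) \<and>
      (\<forall>c v. L (cmul c v) = c * L v))"

definition entire2 :: "(complex^'n \<Rightarrow> complex^'n \<Rightarrow> complex) \<Rightarrow> bool" where
  "entire2 F \<longleftrightarrow> (\<forall>p. \<exists>L. ((\<lambda>q. F (fst q) (snd q)) has_derivative L) (at p) \<and>
      (\<forall>c v w. L (cmul c v, cmul c w) = c * L (v, w)))"

definition nonresonant :: "real^'n \<Rightarrow> bool" where
  "nonresonant \<omega> \<longleftrightarrow> (\<forall>k::int^'n. (\<Sum>i\<in>UNIV. of_int (k $ i) * \<omega> $ i) = 0 \<longrightarrow> k = 0)"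

definition supnorm_int :: "int^'n \<Rightarrow> int" where
  "supnorm_int k = Max ((\<lambda>m. \<bar>k $ m\<bar>) ` UNIV)"

definition periodic_theta :: "(real^'n \<Rightarrow> 'a) \<Rightarrow> bool" where
  "periodic_theta g \<longleftrightarrow> (\<forall>\<theta> i. g (\<theta> + axis i 1) = g \<theta>)"

definition real_entire_ham :: "(real^'n \<Rightarrow> real^'n \<Rightarrow> real) \<Rightarrow> bool" where
  "real_entire_ham H \<longleftrightarrow> (\<forall>r. periodic_theta (\<lambda>\<theta>. H \<theta> r)) \<and>
     (\<exists>F. entire2 F \<and> (\<forall>z w i. F (z + axis i 1) w = F z w) \<and>
          (\<forall>\<theta> r. F (cvec \<theta>) (cvec r) = complex_of_real (H \<theta> r)))"

definition real_analytic_vec :: "(real^'n \<Rightarrow> real) \<Rightarrow> bool" where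
  "real_analytic_vec g \<longleftrightarrow> (\<exists>U G. open U \<and> (\<forall>\<theta>. cvec \<theta> \<in> U) \<and> holo_on_vec G U \<and>
      (\<forall>\<theta>. G (cvec \<theta>) = complex_of_real (g \<theta>)))"

definition grad :: "(real^'n \<Rightarrow> real) \<Rightarrow> real^'n \<Rightarrow> real^'n" where
  "grad g x = (\<chi> i. deriv (\<lambda>s. g (x + s *\<^sub>R axis i 1)) 0)"

definition grad_r :: "(real^'n \<Rightarrow> real^'n \<Rightarrow> real) \<Rightarrow> real^'n \<Rightarrow> real^'n \<Rightarrow> real^'n" where
  "grad_r H \<theta> r = grad (\<lambda>r'. H \<theta> r') r"

definition grad_theta :: "(real^'n \<Rightarrow> real^'n \<Rightarrow> real) \<Rightarrow> real^'n \<Rightarrow> real^'n \<Rightarrow> real^'n" where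
  "grad_theta H \<theta> r = grad (\<lambda>\<theta>'. H \<theta>' r) \<theta>"

(* forward Hamiltonian trajectory for d theta /\ d r:
   theta' = dH/dr,  r' = - dH/dtheta *)
definition ham_traj :: "(real^'n \<Rightarrow> real^'n \<Rightarrow> real) \<Rightarrow> (real^'n) \<times> (real^'n)
    \<Rightarrow> (real \<Rightarrow> (real^'n) \<times> (real^'n)) \<Rightarrow> bool" where
  "ham_traj H p x \<longleftrightarrow> x 0 = p \<and>
     (\<forall>t\<ge>0. (x has_vector_derivative
        (grad_r H (fst (x t)) (snd (x t)), - grad_theta H (fst (x t)) (snd (x t))))
        (at t within {0..}))"

definition monom :: "('n::finite \<Rightarrow> nat) \<Rightarrow> real^'n \<Rightarrow> real" where
  "monom \<alpha> r = (\<Prod>i\<in>UNIV. (r $ i) ^ \<alpha> i)"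

definition mdeg :: "('n::finite \<Rightarrow> nat) \<Rightarrow> nat" where
  "mdeg \<alpha> = (\<Sum>i\<in>UNIV. \<alpha> i)"

definition dtheta_trunc :: "(('n::finite \<Rightarrow> nat) \<Rightarrow> real^'n \<Rightarrow> real) \<Rightarrow> nat
    \<Rightarrow> real^'n \<Rightarrow> real^'n \<Rightarrow> real^'n" where
  "dtheta_trunc a n \<theta> r = (\<Sum>\<alpha>\<in>{\<alpha>. mdeg \<alpha> \<le> n}. monom \<alpha> r *\<^sub>R grad (a \<alpha>) \<theta>)"

(* N is the Birkhoff normal form of H at T^d x {0}: there is a formal series
   f = \<Sum> a_\<alpha>(theta) r^\<alpha> = O(r^2), coefficients real analytic and periodic,
   with H(theta, r + d_theta f(theta,r)) = N(r) as formal power series in r,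
   expressed via truncations: agreement up to order n for every n. *)
definition is_BNF :: "(real^'n \<Rightarrow> real^'n \<Rightarrow> real) \<Rightarrow> (real^'n \<Rightarrow> real) \<Rightarrow> bool" where
  "is_BNF H N \<longleftrightarrow> (\<exists>a :: ('n \<Rightarrow> nat) \<Rightarrow> real^'n \<Rightarrow> real.
     (\<forall>\<alpha>. real_analytic_vec (a \<alpha>) \<and> periodic_theta (a \<alpha>)) \<and>
     (\<forall>\<alpha>. mdeg \<alpha> \<le> 1 \<longrightarrow> a \<alpha> = (\<lambda>_. 0)) \<and>
     (\<forall>n \<theta>. \<exists>C \<delta>. \<delta> > 0 \<and> (\<forall>r. norm r < \<delta> \<longrightarrow>
        \<bar>H \<theta> (r + dtheta_trunc a n \<theta> r) - N r\<bar> \<le> C * norm r ^ (n + 1))))"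

end

theory Submission
  imports Defs
begin

lemma norm_sin_le_exp: fixes z :: complex shows "norm (sin z) \<le> exp (norm z)"
proof -
  have a: "norm (exp (\<i> * z)) \<le> exp (norm z)"
    using abs_Im_le_cmod[of z] by simp
  have b: "norm (exp (-(\<i> * z))) \<le> exp (norm z)"
    using abs_Im_le_cmod[of z] by simp
  have "norm (sin z) = norm (exp(\<i> * z) - exp(-(\<i> * z))) / 2"
    by (simp add: sin_exp_eq norm_divide norm_mult)
  also have "\<dots> \<le> (exp (norm z) + exp (norm z)) / 2"
    using norm_triangle_ineq4[of "exp(\<i> * z)" "exp(-(\<i> * z))"] a b
    by (intro divide_right_mono) linarith+
  finally show ?thesis by simp
qed

lemma norm_cos_le_exp: fixes z :: complex shows "norm (cos z) \<le> exp (norm z)"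
  by (rule norm_cos_le)

definition nK :: "int^'n \<Rightarrow> real" where "nK k = real_of_int (supnorm_int k)"

lemma le_mult_ge1: "0 \<le> (x::real) \<Longrightarrow> 1 \<le> a \<Longrightarrow> x \<le> a * x"
  using mult_right_mono[of 1 a x] by simp

lemma comp_le_nK: "real_of_int \<bar>k $ i\<bar> \<le> nK k"
proof -
  have "\<bar>k $ i\<bar> \<le> Max ((\<lambda>m. \<bar>k $ m\<bar>) ` UNIV)" by (rule Max_ge) auto
  then show ?thesis unfolding nK_def supnorm_int_def by linarith
qed

lemma unif_deriv_tail:
  fixes f' :: "nat \<Rightarrow> 'x \<Rightarrow> 'h::real_normed_vector \<Rightarrow> 'b::banach"
  assumes b: "\<And>i x h. x \<in> S \<Longrightarrow> norm (f' i x h) \<le> M i * norm h"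
    and M0: "\<And>i. 0 \<le> M i" and sM: "summable M" and e: "e > 0"
  shows "\<forall>\<^sub>F n in sequentially. \<forall>x\<in>S. \<forall>h. norm (sum (\<lambda>i. f' i x h) {..<n} - (\<Sum>i. f' i x h)) \<le> e * norm h"
proof -
  obtain N where N: "\<And>n. n \<ge> N \<Longrightarrow> norm (\<Sum>i. M (i + n)) < e"
    using suminf_exist_split[OF e sM] by blast
  show ?thesis unfolding eventually_sequentially
  proof (intro exI allI impI ballI)
    fix n x and h :: 'h assume n: "N \<le> n" and x: "x \<in> S"
    have sMh: "summable (\<lambda>i. M i * norm h)" using sM by (rule summable_mult2)
    have sf: "summable (\<lambda>i. f' i x h)"
      by (rule summable_comparison_test[OF _ sMh]) (use b x in auto)
    have sMn: "summable (\<lambda>i. M (i + n))" using sM by (rule summable_ignore_initial_segment)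
    have "sum (\<lambda>i. f' i x h) {..<n} - (\<Sum>i. f' i x h) = - (\<Sum>i. f' (i + n) x h)"
      using suminf_split_initial_segment[OF sf, of n] by simp
    then have "norm (sum (\<lambda>i. f' i x h) {..<n} - (\<Sum>i. f' i x h)) = norm (\<Sum>i. f' (i + n) x h)"
      by simp
    also have "\<dots> \<le> (\<Sum>i. M (i + n) * norm h)"
      by (rule norm_suminf_le) (use b x summable_mult2[OF sMn] in auto)
    also have "\<dots> = (\<Sum>i. M (i + n)) * norm h" using suminf_mult2[OF sMn] by simp
    also have "\<dots> \<le> e * norm h"
    proof -
      have "0 \<le> (\<Sum>i. M (i + n))" using M0 sMn by (intro suminf_nonneg) auto
      then show ?thesis using N[OF n] by (intro mult_right_mono) auto
    qed
    finally show "norm (sum (\<lambda>i. f' i x h) {..<n} - (\<Sum>i. f' i x h)) \<le> e * norm h" .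
  qed
qed

lemma real_series_deriv:
  fixes f f' :: "nat \<Rightarrow> real \<Rightarrow> real"
  assumes d: "\<And>n t. (f n has_field_derivative f' n t) (at t)"
    and b: "\<And>n t. \<bar>t - x0\<bar> \<le> 1 \<Longrightarrow> \<bar>f' n t\<bar> \<le> M n"
    and sM: "summable M" and s0: "summable (\<lambda>n. f n x0)"
  shows "((\<lambda>t. \<Sum>n. f n t) has_field_derivative (\<Sum>n. f' n x0)) (at x0)"
proof (rule has_field_derivative_series'(2)[of "cball x0 1" f f' x0 x0])
  show "uniformly_convergent_on (cball x0 1) (\<lambda>n x. \<Sum>i<n. f' i x)"
    by (rule Weierstrass_m_test'_ev[OF always_eventually sM])
       (use b in \<open>auto simp: dist_real_def abs_minus_commute\<close>)
qed (use d s0 in \<open>auto intro: has_field_derivative_at_within\<close>)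

lemma sin_shift_int: "sin (x + 2 * pi * of_int k) = sin (x::real)"
  by (simp add: sin_add)
lemma cos_shift_int: "cos (x + 2 * pi * of_int k) = cos (x::real)"
  by (simp add: cos_add)
lemma csin_shift_int: "sin (z + of_real (2 * pi) * of_int k) = (sin z :: complex)"
proof -
  have "of_real (2 * pi) * of_int k = (of_real (2 * pi * of_int k) :: complex)" by simp
  then show ?thesis by (simp only: sin_add cos_of_real sin_of_real) simp
qed

lemma abs_sin_diff_le: "\<bar>sin x - sin y\<bar> \<le> \<bar>x - y\<bar>" for x y :: real
proof -
  have "\<bar>sin x - sin y\<bar> = \<bar>2 * sin ((x - y) / 2) * cos ((x + y) / 2)\<bar>"
    by (simp add: sin_diff_sin)
  also have "\<dots> \<le> 2 * \<bar>(x - y) / 2\<bar> * 1"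
    unfolding abs_mult using abs_sin_x_le_abs_x[of "(x-y)/2"]
    by (intro mult_mono) auto
  finally show ?thesis by simp
qed

lemma abs_cos_diff_le: "\<bar>cos x - cos y\<bar> \<le> \<bar>x - y\<bar>" for x y :: real
proof -
  have "\<bar>cos x - cos y\<bar> = \<bar>2 * sin ((x + y) / 2) * sin ((y - x) / 2)\<bar>"
    by (simp add: cos_diff_cos)
  also have "\<dots> \<le> 2 * 1 * \<bar>(y - x) / 2\<bar>"
    unfolding abs_mult using abs_sin_x_le_abs_x[of "(y-x)/2"]
    by (intro mult_mono) auto
  finally show ?thesis by simp
qed

lemma find_t:
  fixes lm a T :: real
  assumes "lm \<noteq> 0"
  shows "\<exists>t. T \<le> t \<and> t \<le> T + 1 / \<bar>lm\<bar> \<and> 1 \<le> \<bar>sin (a + 2 * pi * lm * t) - sin a\<bar>"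
proof -
  define x0 where "x0 = (if sin a \<le> 0 then pi / 2 else - (pi / 2))"
  have sx0: "1 \<le> \<bar>sin x0 - sin a\<bar>" unfolding x0_def by auto
  define b where "b = a + 2 * pi * lm * T"
  have key: "\<exists>z. \<bar>z - b\<bar> \<le> 2 * pi \<and> (z - b) * lm \<ge> 0 \<and> sin z = sin x0"
  proof (cases "lm > 0")
    case True
    define k where "k = ceiling ((b - x0) / (2 * pi))"
    have k1: "(b - x0) / (2 * pi) \<le> k" "k < (b - x0) / (2 * pi) + 1" unfolding k_def by linarith+
    define z where "z = x0 + 2 * pi * of_int k"
    have "b \<le> z" "z < b + 2 * pi" using k1 pi_gt_zero unfolding z_def by (auto simp: field_simps)
    moreover have "sin z = sin x0" unfolding z_def by (rule sin_shift_int)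
    ultimately show ?thesis using True by (intro exI[of _ z]) auto
  next
    case False
    then have ln: "lm < 0" using assms by simp
    define k where "k = floor ((b - x0) / (2 * pi))"
    have k1: "k \<le> (b - x0) / (2 * pi)" "(b - x0) / (2 * pi) - 1 < k" unfolding k_def by linarith+
    define z where "z = x0 + 2 * pi * of_int k"
    have "z \<le> b" "b - 2 * pi < z" using k1 pi_gt_zero unfolding z_def by (auto simp: field_simps)
    moreover have "sin z = sin x0" unfolding z_def by (rule sin_shift_int)
    ultimately show ?thesis using ln by (intro exI[of _ z]) (auto simp: mult_nonpos_nonpos)
  qed
  then obtain z where z: "\<bar>z - b\<bar> \<le> 2 * pi" "(z - b) * lm \<ge> 0" "sin z = sin x0" by blast
  define t where "t = T + (z - b) / (2 * pi * lm)"
  have "a + 2 * pi * lm * t = z" unfolding t_def b_def using assms by (simp add: field_simps)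
  moreover have "T \<le> t"
  proof -
    have "0 < lm * lm" using assms by (simp add: zero_less_mult_iff linorder_neq_iff) blast
    then have "0 \<le> (z - b) * lm / (2 * pi * lm * lm)" using z(2) by (intro divide_nonneg_pos) auto
    moreover have "(z - b) / (2 * pi * lm) = (z - b) * lm / (2 * pi * lm * lm)"
      using assms by simp
    ultimately show ?thesis unfolding t_def by linarith
  qed
  moreover have "t \<le> T + 1 / \<bar>lm\<bar>"
  proof -
    have "(z - b) / (2 * pi * lm) \<le> \<bar>(z - b) / (2 * pi * lm)\<bar>" by (rule abs_ge_self)
    also have "\<dots> = \<bar>z - b\<bar> / (2 * pi * \<bar>lm\<bar>)" by (simp add: abs_mult)
    also have "\<dots> \<le> 2 * pi / (2 * pi * \<bar>lm\<bar>)" using z(1) assms by (intro divide_right_mono) auto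
    also have "\<dots> = 1 / \<bar>lm\<bar>" by simp
    finally show ?thesis unfolding t_def by simp
  qed
  ultimately show ?thesis using sx0 z(3) by (intro exI[of _ t]) auto
qed

lemma vec_sum_axis: "(\<Sum>m\<in>UNIV. a m *\<^sub>R axis m (1::real)) = (\<chi> m. a m)"
  by (subst vec_eq_iff) (simp add: axis_def if_distrib sum.delta cong: if_cong)

lemma vec_lambda_vd:
  fixes f :: "'n::finite \<Rightarrow> real \<Rightarrow> real"
  assumes "\<And>m. ((\<lambda>t. f m t) has_vector_derivative f' m) (at t within S)"
  shows "((\<lambda>t. \<chi> m. f m t) has_vector_derivative (\<chi> m. f' m)) (at t within S)"
proof -
  have e: "(\<lambda>t. \<chi> m. f m t) = (\<lambda>t. \<Sum>m\<in>UNIV. f m t *\<^sub>R axis m (1::real))"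
    by (simp add: vec_sum_axis)
  have "((\<lambda>t. \<Sum>m\<in>UNIV. f m t *\<^sub>R axis m (1::real)) has_vector_derivative (\<Sum>m\<in>UNIV. f m t *\<^sub>R 0 + f' m *\<^sub>R axis m 1)) (at t within S)"
    using assms unfolding has_real_derivative_iff_has_vector_derivative[symmetric]
    by (intro has_vector_derivative_sum has_vector_derivative_scaleR has_vector_derivative_const) auto
  then show ?thesis unfolding e by (simp add: vec_sum_axis)
qed

lemma fst_comp_vd: "(x has_vector_derivative v) F \<Longrightarrow> ((\<lambda>t. fst (x t) $ m) has_vector_derivative (fst v $ m)) F"
  using bounded_linear.has_vector_derivative[OF bounded_linear_compose[OF bounded_linear_vec_nth bounded_linear_fst], of x v F m]
  by simp

lemma snd_comp_vd: "(x has_vector_derivative v) F \<Longrightarrow> ((\<lambda>t. snd (x t) $ m) has_vector_derivative (snd v $ m)) F"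
  using bounded_linear.has_vector_derivative[OF bounded_linear_compose[OF bounded_linear_vec_nth bounded_linear_snd], of x v F m]
  by simp

lemma const_on_nonneg:
  fixes f :: "real \<Rightarrow> real"
  assumes "\<And>t. 0 \<le> t \<Longrightarrow> (f has_real_derivative 0) (at t within {0..})" "0 \<le> t"
  shows "f t = f 0"
proof -
  obtain C where "\<forall>x\<in>{0..}. f x = C"
    using has_field_derivative_zero_constant[of "{0..}" f] assms(1) by auto
  then show ?thesis using assms(2) by auto
qed

locale cfg =
  fixes \<omega> :: "real^'n" and l :: 'n and K :: "nat \<Rightarrow> int^'n" and c :: "nat \<Rightarrow> real"
  assumes Kl: "\<And>j. K j $ l = 0"
    and nK1: "\<And>j. 1 \<le> nK (K j)"
    and cpos: "\<And>j. 0 < c j"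
    and lam: "\<And>j. \<bar>\<Sum>i\<in>UNIV. of_int (K j $ i) * \<omega> $ i\<bar> = (c j)^2"
    and P4: "\<And>j. c j \<le> exp (-(real j+1) * (nK (K j) + real j + 1))"
    and P5: "\<And>j. c j * nK (K j) \<le> (if j = 0 then 1 else (c (j-1))^2) * exp (-(real j * (real j + 2)))"
    and P6: "\<And>j. c j * exp (real j * (real j + 2)) * (1 + real j / (if j = 0 then 1 else (c (j-1))^2)) \<le> 1"
begin

lemma master_summable:
  assumes "0 \<le> \<rho>" "0 \<le> A"
  shows "summable (\<lambda>j. c j * (real j + 3) * \<rho>^j * exp (A * nK (K j)))"
proof -
  obtain N :: nat where N: "real N \<ge> A" "real N \<ge> \<rho> + 2" 
    by (metis max.bounded_iff real_arch_simple)
  show ?thesis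
proof (rule summable_comparison_test'[where N=N])
  show "summable (\<lambda>j. (1/2::real)^j)" by simp
  fix j assume "j \<ge> N"
  then have jA: "real j \<ge> A" and jr: "real j \<ge> \<rho> + 2" using N by auto
  have j1: "real j \<ge> 1" using jr assms by simp
  have t0: "0 \<le> c j * (real j + 3) * \<rho>^j * exp (A * nK (K j))"
    using cpos[of j] assms by simp
  have "c j * (real j + 3) * \<rho>^j * exp (A * nK (K j)) \<le>
        exp (-(real j+1) * (nK (K j) + real j + 1)) * exp (real j + 2) * exp \<rho> ^ j * exp (A * nK (K j))"
  proof -
    have "real j + 3 \<le> exp (real j + 2)" using exp_ge_add_one_self[of "real j + 2"] by simp
    moreover have "\<rho>^j \<le> exp \<rho> ^ j"
      using power_mono[of \<rho> "exp \<rho>" j] exp_ge_add_one_self[of \<rho>] assms by simp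
    ultimately show ?thesis
      using P4[of j] cpos[of j] assms
      by (intro mult_right_mono mult_mono) auto
  qed
  also have "\<dots> = exp (-(real j+1) * (nK (K j) + real j + 1) + (real j + 2) + \<rho> * real j + A * nK (K j))"
    by (simp add: exp_add exp_of_nat_mult[symmetric] mult.commute)
  also have "\<dots> \<le> exp (- real j)"
  proof -
    have "A * nK (K j) \<le> (real j + 1) * nK (K j)"
      using jA nK1[of j] by (intro mult_right_mono) auto
    moreover have "(real j + 1) * (real j + 1) \<ge> (\<rho> + 2) * real j + 2 + real j"
    proof -
      have "real j * real j \<ge> (\<rho> + 2) * real j" using jr j1 by (intro mult_right_mono) auto
      then show ?thesis using j1 by (simp add: algebra_simps)
    qed
    ultimately show ?thesis by (simp add: algebra_simps)
  qed
  also have "\<dots> = exp (-1) ^ j" by (simp add: exp_of_nat_mult[symmetric])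
  also have "\<dots> \<le> (1/2)^j"
  proof -
    have "exp (-1::real) \<le> 1/2"
      using exp_ge_add_one_self[of "1::real"] by (simp add: exp_minus field_simps)
    then show ?thesis by (intro power_mono) auto
  qed
  finally show "norm (c j * (real j + 3) * \<rho>^j * exp (A * nK (K j))) \<le> (1/2)^j"
    using t0 by simp
qed
qed

definition lamj :: "nat \<Rightarrow> real" where "lamj j = (\<Sum>i\<in>UNIV. of_int (K j $ i) * \<omega> $ i)"
definition phi :: "nat \<Rightarrow> real^'n \<Rightarrow> real" where
  "phi j \<theta> = 2 * pi * (\<Sum>i\<in>UNIV. of_int (K j $ i) * \<theta> $ i)"
definition Hs :: "real^'n \<Rightarrow> real^'n \<Rightarrow> real" where
  "Hs \<theta> r = \<omega> \<bullet> r + (\<Sum>j. c j * (r $ l)^(j+2) * sin (phi j \<theta>))"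
definition phic :: "nat \<Rightarrow> complex^'n \<Rightarrow> complex" where
  "phic j z = of_real (2 * pi) * (\<Sum>i\<in>UNIV. of_int (K j $ i) * z $ i)"
definition ft :: "nat \<Rightarrow> (complex^'n) \<times> (complex^'n) \<Rightarrow> complex" where
  "ft j q = of_real (c j) * (snd q $ l)^(j+2) * sin (phic j (fst q))"
definition ft' :: "nat \<Rightarrow> (complex^'n) \<times> (complex^'n) \<Rightarrow> (complex^'n) \<times> (complex^'n) \<Rightarrow> complex" where
  "ft' j q h = of_real (c j) * (of_nat (j+2) * (snd q $ l)^(j+1) * (snd h $ l) * sin (phic j (fst q))
      + (snd q $ l)^(j+2) * (cos (phic j (fst q)) * phic j (fst h)))"
definition linc :: "complex^'n \<Rightarrow> complex" where
  "linc w = (\<Sum>i\<in>UNIV. of_real (\<omega> $ i) * w $ i)"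
definition Fc :: "complex^'n \<Rightarrow> complex^'n \<Rightarrow> complex" where
  "Fc z w = linc w + (\<Sum>j. ft j (z, w))"

lemma bl_coord: "bounded_linear (\<lambda>z::complex^'n. a * z $ i)"
  by (rule bounded_linear_compose[OF bounded_linear_mult_right bounded_linear_vec_nth])

lemma bl_phic: "bounded_linear (phic j)"
  unfolding phic_def
  by (intro bounded_linear_compose[OF bounded_linear_mult_right] bounded_linear_sum bl_coord)

lemma bl_linc: "bounded_linear linc"
  unfolding linc_def
  by (intro bounded_linear_sum bl_coord)

lemma norm_phic: "norm (phic j z) \<le> 2 * pi * real CARD('n) * nK (K j) * norm z"
proof -
  have "norm (\<Sum>i\<in>UNIV. of_int (K j $ i) * z $ i) \<le> (\<Sum>i\<in>(UNIV::'n set). nK (K j) * norm z)"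
  proof (rule order_trans[OF norm_sum], rule sum_mono)
    fix i
    have "norm (of_int (K j $ i) * z $ i) = real_of_int \<bar>K j $ i\<bar> * norm (z $ i)"
      by (simp add: norm_mult)
    also have "\<dots> \<le> nK (K j) * norm z"
      using comp_le_nK[of "K j" i] Finite_Cartesian_Product.norm_nth_le
      by (intro mult_mono) auto
    finally show "norm (of_int (K j $ i) * z $ i) \<le> nK (K j) * norm z" .
  qed
  then show ?thesis unfolding phic_def by (simp add: norm_mult mult_left_mono algebra_simps)
qed

lemma sin_comp_deriv:
  fixes f :: "'a::real_normed_vector \<Rightarrow> complex"
  assumes "(f has_derivative f') (at x within S)"
  shows "((\<lambda>x. sin (f x)) has_derivative (\<lambda>h. f' h * cos (f x))) (at x within S)"
proof -
  have "(sin has_derivative (\<lambda>h. h * cos (f x))) (at (f x))"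
    using DERIV_sin[of "f x"] unfolding has_field_derivative_def by (rule has_derivative_eq_rhs) (simp add: fun_eq_iff mult.commute)
  from has_derivative_compose[OF assms this] show ?thesis .
qed

lemma cos_comp_deriv:
  fixes f :: "'a::real_normed_vector \<Rightarrow> complex"
  assumes "(f has_derivative f') (at x within S)"
  shows "((\<lambda>x. cos (f x)) has_derivative (\<lambda>h. f' h * - sin (f x))) (at x within S)"
proof -
  have "(cos has_derivative (\<lambda>h. h * - sin (f x))) (at (f x))"
    using DERIV_cos[of "f x"] unfolding has_field_derivative_def by (rule has_derivative_eq_rhs) (simp add: fun_eq_iff mult.commute)
  from has_derivative_compose[OF assms this] show ?thesis .
qed

lemma ft_deriv: "(ft j has_derivative ft' j q) (at q within S)"
proof -
  have d1: "((\<lambda>q. phic j (fst q)) has_derivative (\<lambda>h. phic j (fst h))) (at q within S)"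
    using bounded_linear_compose[OF bl_phic bounded_linear_fst]
    by (rule bounded_linear_imp_has_derivative)
  have d2: "((\<lambda>q::(complex^'n) \<times> (complex^'n). snd q $ l) has_derivative (\<lambda>h. snd h $ l)) (at q within S)"
    using bounded_linear_compose[OF bounded_linear_vec_nth bounded_linear_snd]
    by (rule bounded_linear_imp_has_derivative)
  show ?thesis
    unfolding ft_def ft'_def
    apply (rule has_derivative_eq_rhs)
     apply (rule has_derivative_mult has_derivative_const sin_comp_deriv[OF d1]
            has_derivative_power d2)+
    apply (rule ext)
    apply (simp add: algebra_simps)
    done
qed

definition Mf :: "real \<Rightarrow> nat \<Rightarrow> real" where
  "Mf R j = (R+1)^2 * (1 + 2*pi*real CARD('n)) *
     (c j * (real j + 3) * (R+1)^j * exp ((2*pi*real CARD('n)*R + 1) * nK (K j)))"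

lemma Mf_summable: "R \<ge> 0 \<Longrightarrow> summable (Mf R)"
  unfolding Mf_def
  by (intro summable_mult master_summable) auto

lemma Mf_nonneg: "R \<ge> 0 \<Longrightarrow> 0 \<le> Mf R j"
  unfolding Mf_def using cpos[of j] by simp

lemma nsnd: "norm (snd q) \<le> norm q" by (metis norm_snd_le prod.collapse)
lemma nfst: "norm (fst q) \<le> norm q" by (metis norm_fst_le prod.collapse)

lemma ft'_bound:
  assumes R: "0 \<le> R" and q: "norm q \<le> R"
  shows "norm (ft' j q h) \<le> Mf R j * norm h"
proof -
  define D where "D = real CARD('n)"
  define N where "N = nK (K j)"
  define a where "a = snd q $ l"
  define X where "X = 2*pi*D*N*R"
  have N1: "1 \<le> N" using nK1 unfolding N_def by simp
  have D0: "0 \<le> D" unfolding D_def by simp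
  have X0: "0 \<le> X" unfolding X_def using N1 D0 R by simp
  have na: "norm a \<le> R" unfolding a_def
    using Finite_Cartesian_Product.norm_nth_le[of "snd q" l] nsnd[of q] q by linarith
  have nz: "norm (fst q) \<le> R" using nfst[of q] q by linarith
  have np: "norm (phic j (fst q)) \<le> X"
    apply (rule order_trans[OF norm_phic])
    unfolding X_def D_def N_def using nK1[of j] by (intro mult_left_mono nz) auto
  have ns: "norm (sin (phic j (fst q))) \<le> exp X"
    using norm_sin_le_exp np by (meson exp_le_cancel_iff order_trans)
  have nc: "norm (cos (phic j (fst q))) \<le> exp X"
    using norm_cos_le_exp np by (meson exp_le_cancel_iff order_trans)
  have nh: "norm (snd h $ l) \<le> norm h"
    using Finite_Cartesian_Product.norm_nth_le[of "snd h" l] nsnd[of h] by linarith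
  have nph: "norm (phic j (fst h)) \<le> 2*pi*D*N * norm h"
    apply (rule order_trans[OF norm_phic])
    unfolding D_def N_def using nK1[of j] by (intro mult_left_mono nfst) auto
  have t1: "norm (of_nat (j+2) * a^(j+1) * (snd h $ l) * sin (phic j (fst q)))
      \<le> (real j + 3) * (R+1)^(j+2) * N * exp X * norm h"
  proof -
    have "norm (of_nat (j+2) * a^(j+1) * (snd h $ l) * sin (phic j (fst q)))
        = (real j + 2) * norm a ^(j+1) * norm (snd h $ l) * norm (sin (phic j (fst q)))"
      by (simp only: norm_mult norm_power norm_of_nat) simp
    also have "\<dots> \<le> ((real j + 3) * N) * (R+1)^(j+2) * norm h * exp X"
    proof (intro mult_mono)
      show "real j + 2 \<le> (real j + 3) * N"
      proof -
        have "(real j+3)*1 \<le> (real j+3)*N" using N1 by (intro mult_left_mono) auto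
        then show ?thesis by (simp only: mult_1_right)
      qed
      show "norm a ^(j+1) \<le> (R+1)^(j+2)"
      proof -
        have "norm a ^(j+1) \<le> (R+1)^(j+1)" using na R by (intro power_mono) auto
        also have "\<dots> \<le> (R+1)^(j+2)" using R by (intro power_increasing) auto
        finally show ?thesis .
      qed
    qed (use nh ns R N1 in auto)
    finally show ?thesis by (simp add: algebra_simps)
  qed
  have t2: "norm (a^(j+2) * (cos (phic j (fst q)) * phic j (fst h)))
      \<le> (real j + 3) * (R+1)^(j+2) * (2*pi*D) * N * exp X * norm h"
  proof -
    have "norm (a^(j+2) * (cos (phic j (fst q)) * phic j (fst h)))
        = norm a^(j+2) * norm (cos (phic j (fst q))) * norm (phic j (fst h))"
      by (simp add: norm_mult norm_power)
    also have "\<dots> \<le> (R+1)^(j+2) * exp X * (2*pi*D*N * norm h)"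
      using na nc nph R by (intro mult_mono power_mono) auto
    also have "\<dots> \<le> (real j + 3) * ((R+1)^(j+2) * exp X * (2*pi*D*N * norm h))"
      using R D0 N1 by (intro le_mult_ge1) auto
    finally show ?thesis by (simp add: algebra_simps)
  qed
  have "norm (ft' j q h) \<le> c j * ((real j + 3) * (R+1)^(j+2) * N * exp X * norm h
       + (real j + 3) * (R+1)^(j+2) * (2*pi*D) * N * exp X * norm h)"
  proof -
    have e: "ft' j q h = of_real (c j) * (of_nat (j+2) * a^(j+1) * (snd h $ l) * sin (phic j (fst q))
      + a^(j+2) * (cos (phic j (fst q)) * phic j (fst h)))" unfolding ft'_def a_def by simp
    have "norm (ft' j q h) = c j * norm (of_nat (j+2) * a^(j+1) * (snd h $ l) * sin (phic j (fst q))
      + a^(j+2) * (cos (phic j (fst q)) * phic j (fst h)))"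
      unfolding e norm_mult using cpos[of j] by simp
    also have "\<dots> \<le> c j * ((real j + 3) * (R+1)^(j+2) * N * exp X * norm h
       + (real j + 3) * (R+1)^(j+2) * (2*pi*D) * N * exp X * norm h)"
      using cpos[of j] by (intro mult_left_mono order_trans[OF norm_triangle_ineq] add_mono t1 t2) auto
    finally show ?thesis .
  qed
  also have "\<dots> = (R+1)^2 * (1 + 2*pi*D) * (c j * (real j + 3) * (R+1)^j * (N * exp X)) * norm h"
  proof -
    have p: "(R+1)^(j+2) = (R+1)^2*(R+1)^j" by (simp only: power_add mult.commute)
    show ?thesis unfolding p by (simp only: algebra_simps)
  qed
  also have "\<dots> \<le> Mf R j * norm h"
  proof -
    have "N * exp X \<le> exp ((2*pi*D*R + 1) * N)"
    proof -
      have "N \<le> exp N" using exp_ge_add_one_self[of N] by linarith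
      then have "N * exp X \<le> exp N * exp X" by (intro mult_right_mono) auto
      also have "\<dots> = exp ((2*pi*D*R + 1) * N)" unfolding X_def by (simp add: exp_add[symmetric] algebra_simps)
      finally show ?thesis .
    qed
    then show ?thesis unfolding Mf_def D_def[symmetric] N_def[symmetric] using cpos[of j] R D0
      by (intro mult_right_mono mult_left_mono) auto
  qed
  finally show ?thesis .
qed

lemma ft_zero: "ft j 0 = 0" unfolding ft_def by simp

lemma ft'_summable: "summable (\<lambda>j. ft' j p h)"
proof (rule summable_comparison_test[OF _ summable_mult2[OF Mf_summable[of "norm p"]]])
  show "\<exists>N. \<forall>n\<ge>N. norm (ft' n p h) \<le> Mf (norm p) n * norm h"
    using ft'_bound[of "norm p" p] by auto
qed simp

lemma ft'_cmul: "ft' j p (cmul a v, cmul a w) = a * ft' j p (v, w)"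
proof -
  have "phic j (cmul a v) = a * phic j v"
    unfolding phic_def cmul_def by (simp add: sum_distrib_left algebra_simps)
  then show ?thesis unfolding ft'_def cmul_def by (simp add: algebra_simps)
qed

lemma linc_cmul: "linc (cmul a w) = a * linc w"
  unfolding linc_def cmul_def by (simp add: sum_distrib_left algebra_simps)

lemma Fc_deriv: "((\<lambda>q. Fc (fst q) (snd q)) has_derivative (\<lambda>h. linc (snd h) + (\<Sum>j. ft' j p h))) (at p)"
proof -
  define R where "R = norm p + 1"
  have R0: "0 \<le> R" unfolding R_def by simp
  have "\<exists>g. \<forall>x\<in>ball 0 R. (\<lambda>n. ft n x) sums g x \<and> (g has_derivative (\<lambda>h. \<Sum>i. ft' i x h)) (at x within ball 0 R)"
  proof (rule has_derivative_series[where x=0 and l=0])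
    show "(\<lambda>n. ft n 0) sums 0" by (simp add: ft_zero)
    show "\<And>e. 0 < e \<Longrightarrow> \<forall>\<^sub>F n in sequentially. \<forall>x\<in>ball 0 R. \<forall>h. norm ((\<Sum>i<n. ft' i x h) - (\<Sum>i. ft' i x h)) \<le> e * norm h"
      by (rule unif_deriv_tail[where M="Mf R"]) (auto intro: ft'_bound R0 Mf_nonneg Mf_summable)
  qed (auto simp: ft_deriv R_def add_nonneg_pos)
  then obtain g where g: "\<And>x. x\<in>ball 0 R \<Longrightarrow> (\<lambda>n. ft n x) sums g x \<and> (g has_derivative (\<lambda>h. \<Sum>i. ft' i x h)) (at x within ball 0 R)"
    by blast
  have pin: "p \<in> ball 0 R" unfolding R_def by simp
  have "(g has_derivative (\<lambda>h. \<Sum>i. ft' i p h)) (at p)"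
    using g[OF pin] at_within_open[OF pin open_ball] by simp
  then have d: "((\<lambda>q. \<Sum>n. ft n q) has_derivative (\<lambda>h. \<Sum>i. ft' i p h)) (at p)"
    by (rule has_derivative_transform_within_open[OF _ open_ball pin]) (use g sums_unique in metis)
  have dl: "((\<lambda>q. linc (snd q)) has_derivative (\<lambda>h. linc (snd h))) (at p)"
    using bounded_linear_compose[OF bl_linc bounded_linear_snd]
    by (rule bounded_linear_imp_has_derivative)
  show ?thesis unfolding Fc_def using has_derivative_add[OF dl d] by simp
qed

lemma Fc_entire: "entire2 Fc"
  unfolding entire2_def
proof
  fix p
  show "\<exists>L. ((\<lambda>q. Fc (fst q) (snd q)) has_derivative L) (at p) \<and> (\<forall>a v w. L (cmul a v, cmul a w) = a * L (v, w))"
  proof (intro exI conjI allI)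
    show "((\<lambda>q. Fc (fst q) (snd q)) has_derivative (\<lambda>h. linc (snd h) + (\<Sum>j. ft' j p h))) (at p)"
      by (rule Fc_deriv)
    fix a v w
    show "linc (snd (cmul a v, cmul a w)) + (\<Sum>j. ft' j p (cmul a v, cmul a w)) = a * (linc (snd (v, w)) + (\<Sum>j. ft' j p (v, w)))"
      using suminf_mult[OF ft'_summable[of p "(v,w)"], of a]
      by (simp add: ft'_cmul linc_cmul distrib_left)
  qed
qed

lemma sumc: "0 \<le> \<rho> \<Longrightarrow> summable (\<lambda>j. c j * (real j + 3) * \<rho>^j * nK (K j))"
proof (rule summable_comparison_test[OF _ master_summable[of \<rho> 1]])
  assume r: "0 \<le> \<rho>"
  show "\<exists>N. \<forall>n\<ge>N. norm (c n * (real n + 3) * \<rho> ^ n * nK (K n)) \<le> c n * (real n + 3) * \<rho> ^ n * exp (1 * nK (K n))"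
  proof (intro exI allI impI)
    fix n
    have "nK (K n) \<le> exp (nK (K n))" using exp_ge_add_one_self[of "nK (K n)"] by linarith
    then show "norm (c n * (real n + 3) * \<rho> ^ n * nK (K n)) \<le> c n * (real n + 3) * \<rho> ^ n * exp (1 * nK (K n))"
      using cpos[of n] nK1[of n] r by (simp add: abs_mult) (intro mult_left_mono, auto)
  qed
qed auto

lemma sumc_cmp:
  assumes "0 \<le> \<rho>" "\<And>j. \<bar>f j\<bar> \<le> C * (c j * (real j + 3) * \<rho>^j * nK (K j))"
  shows "summable (f :: nat \<Rightarrow> real)"
  by (rule summable_comparison_test[OF _ summable_mult[OF sumc[OF assms(1)], of C]]) (use assms(2) in auto)

lemma Hs_series_summable: "summable (\<lambda>j. c j * (r $ l)^(j+2) * sin (phi j \<theta>))"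
proof (rule sumc_cmp[of "\<bar>r $ l\<bar>" _ "(r $ l)^2"])
  fix j
  define x where "x = \<bar>r $ l\<bar>"
  have x0: "0 \<le> x" unfolding x_def by simp
  have "\<bar>c j * (r $ l)^(j+2) * sin (phi j \<theta>)\<bar> \<le> c j * x^(j+2) * 1"
    unfolding x_def using cpos[of j] by (simp add: abs_mult power_abs) (intro mult_left_mono mult_right_le_one_le, auto)
  also have "\<dots> = c j * x^2 * x^j" by (simp add: power_add power2_eq_square)
  also have "\<dots> \<le> ((real j + 3) * nK (K j)) * (c j * x^2 * x^j)"
  proof (rule le_mult_ge1)
    show "0 \<le> c j * x^2 * x^j" using cpos[of j] x0 by simp
    have "1 * 1 \<le> (real j + 3) * nK (K j)" using nK1[of j] by (intro mult_mono) auto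
    then show "1 \<le> (real j + 3) * nK (K j)" by simp
  qed
  also have "\<dots> = (r $ l)^2 * (c j * (real j + 3) * x^j * nK (K j))"
    unfolding x_def by (simp add: power2_abs ac_simps)
  finally show "\<bar>c j * (r $ l)^(j+2) * sin (phi j \<theta>)\<bar> \<le> (r $ l)^2 * (c j * (real j + 3) * \<bar>r $ l\<bar>^j * nK (K j))"
    unfolding x_def .
qed simp

lemma cvec_nth [simp]: "cvec x $ i = of_real (x $ i)" unfolding cvec_def by simp

lemma phic_cvec: "phic j (cvec \<theta>) = of_real (phi j \<theta>)"
  unfolding phic_def phi_def cvec_def by simp

lemma Fc_real: "Fc (cvec \<theta>) (cvec r) = of_real (Hs \<theta> r)"
proof -
  have "linc (cvec r) = of_real (\<omega> \<bullet> r)"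
    unfolding linc_def cvec_def inner_vec_def by simp
  moreover have "ft j (cvec \<theta>, cvec r) = of_real (c j * (r $ l)^(j+2) * sin (phi j \<theta>))" for j
    unfolding ft_def by (simp add: phic_cvec sin_of_real)
  moreover have "(\<Sum>j. (of_real (c j * (r $ l)^(j+2) * sin (phi j \<theta>)) :: complex)) = of_real (\<Sum>j. c j * (r $ l)^(j+2) * sin (phi j \<theta>))"
    by (rule suminf_of_real[symmetric, OF Hs_series_summable])
  ultimately show ?thesis unfolding Fc_def Hs_def by simp
qed

lemma phi_shift: "phi j (\<theta> + s *\<^sub>R axis i 1) = phi j \<theta> + 2 * pi * of_int (K j $ i) * s"
proof -
  have "(\<Sum>m\<in>UNIV. of_int (K j $ m) * (\<theta> + s *\<^sub>R axis i 1) $ m)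
      = (\<Sum>m\<in>UNIV. of_int (K j $ m) * \<theta> $ m) + (\<Sum>m\<in>UNIV. of_int (K j $ m) * (s * (if m = i then 1 else 0)))"
    by (simp add: axis_def distrib_left sum.distrib)
  also have "(\<Sum>m\<in>UNIV. of_int (K j $ m) * (s * (if m = i then 1 else 0))) = of_int (K j $ i) * s"
    by (simp add: if_distrib sum.delta cong: if_cong)
  finally show ?thesis unfolding phi_def by (simp add: algebra_simps)
qed

lemma phi_shift1: "phi j (\<theta> + axis i 1) = phi j \<theta> + 2 * pi * of_int (K j $ i)"
  using phi_shift[of j \<theta> 1 i] by simp

lemma phic_shift1: "phic j (z + axis i 1) = phic j z + of_real (2 * pi) * of_int (K j $ i)"
proof -
  have "(\<Sum>m\<in>UNIV. of_int (K j $ m) * (z + axis i 1) $ m)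
      = (\<Sum>m\<in>UNIV. of_int (K j $ m) * z $ m) + (\<Sum>m\<in>UNIV. of_int (K j $ m) * (if m = i then 1 else 0))"
    by (simp add: axis_def distrib_left sum.distrib)
  also have "(\<Sum>m\<in>UNIV. of_int (K j $ m) * (if m = i then 1 else 0)) = (of_int (K j $ i) :: complex)"
    by (simp add: if_distrib sum.delta cong: if_cong)
  finally show ?thesis unfolding phic_def by (simp add: algebra_simps)
qed

lemma ft_shift: "ft j (z + axis i 1, w) = ft j (z, w)"
  unfolding ft_def fst_conv snd_conv phic_shift1 csin_shift_int ..

lemma Fc_periodic: "Fc (z + axis i 1) w = Fc z w"
  unfolding Fc_def by (simp add: ft_shift)

lemma Hs_periodic: "periodic_theta (\<lambda>\<theta>. Hs \<theta> r)"
  unfolding periodic_theta_def Hs_def by (simp add: phi_shift1 sin_shift_int)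

lemma real_entire: "real_entire_ham Hs"
  unfolding real_entire_ham_def
  using Hs_periodic Fc_entire Fc_periodic Fc_real by blast

lemma grad_theta_Hs: "grad_theta Hs \<theta> r $ i = (\<Sum>j. c j * (r $ l)^(j+2) * (cos (phi j \<theta>) * (2 * pi * of_int (K j $ i))))"
proof -
  define f where "f n s = c n * (r $ l)^(n+2) * sin (phi n \<theta> + 2 * pi * of_int (K n $ i) * s)" for n s
  define f' where "f' n s = c n * (r $ l)^(n+2) * (cos (phi n \<theta> + 2 * pi * of_int (K n $ i) * s) * (2 * pi * of_int (K n $ i)))" for n s
  have e: "(\<lambda>s. Hs (\<theta> + s *\<^sub>R axis i 1) r) = (\<lambda>s. \<omega> \<bullet> r + (\<Sum>n. f n s))"
    unfolding Hs_def f_def by (simp add: phi_shift)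
  have "((\<lambda>s. \<Sum>n. f n s) has_field_derivative (\<Sum>n. f' n 0)) (at 0)"
  proof (rule real_series_deriv[where M="\<lambda>n. 2 * pi * (c n * (real n + 3) * \<bar>r $ l\<bar>^n * nK (K n)) * (r $ l)^2"])
    show "(f n has_field_derivative f' n t) (at t)" for n t
      unfolding f_def f'_def by (auto intro!: derivative_eq_intros)
    show "summable (\<lambda>n. f n 0)" unfolding f_def using Hs_series_summable by simp
    show "summable (\<lambda>n. 2 * pi * (c n * (real n + 3) * \<bar>r $ l\<bar>^n * nK (K n)) * (r $ l)^2)"
      by (intro summable_mult summable_mult2 sumc) auto
    fix n t
    have "\<bar>f' n t\<bar> = c n * \<bar>r $ l\<bar>^(n+2) * (\<bar>cos (phi n \<theta> + 2 * pi * of_int (K n $ i) * t)\<bar> * (2 * pi * \<bar>of_int (K n $ i)\<bar>))"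
      unfolding f'_def using cpos[of n] by (simp add: abs_mult power_abs)
    also have "\<dots> \<le> c n * \<bar>r $ l\<bar>^(n+2) * (1 * (2 * pi * nK (K n)))"
      using cpos[of n] comp_le_nK[of "K n" i]
      by (intro mult_left_mono mult_mono) auto
    also have "\<dots> \<le> 2 * pi * (c n * (real n + 3) * \<bar>r $ l\<bar>^n * nK (K n)) * (r $ l)^2"
    proof -
      have "c n * \<bar>r $ l\<bar>^(n+2) * (1 * (2 * pi * nK (K n))) = 2 * pi * (c n * 1 * \<bar>r $ l\<bar>^n * nK (K n)) * (r $ l)^2"
        by (simp add: power_add power2_eq_square abs_mult_self_eq algebra_simps)
      also have "\<dots> \<le> 2 * pi * (c n * (real n + 3) * \<bar>r $ l\<bar>^n * nK (K n)) * (r $ l)^2"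
        using cpos[of n] nK1[of n] by (intro mult_right_mono mult_left_mono) auto
      finally show ?thesis .
    qed
    finally show "\<bar>f' n t\<bar> \<le> 2 * pi * (c n * (real n + 3) * \<bar>r $ l\<bar>^n * nK (K n)) * (r $ l)^2" .
  qed
  then have "((\<lambda>s. Hs (\<theta> + s *\<^sub>R axis i 1) r) has_field_derivative (\<Sum>n. f' n 0)) (at 0)"
    unfolding e by (auto intro!: derivative_eq_intros)
  then show ?thesis
    unfolding grad_theta_def grad_def f'_def by (simp add: DERIV_imp_deriv)
qed

lemma grad_r_Hs: "grad_r Hs \<theta> r $ i = \<omega> $ i + (if i = l then (\<Sum>j. c j * (real j + 2) * (r $ l)^(j+1) * sin (phi j \<theta>)) else 0)"
proof -
  have inner: "\<omega> \<bullet> (r + s *\<^sub>R axis i 1) = \<omega> \<bullet> r + s * \<omega> $ i" for s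
    by (simp add: inner_add_right inner_axis)
  show ?thesis
  proof (cases "i = l")
    case False
    have e: "(\<lambda>s. Hs \<theta> (r + s *\<^sub>R axis i 1)) = (\<lambda>s. \<omega> \<bullet> r + s * \<omega> $ i + (\<Sum>j. c j * (r $ l)^(j+2) * sin (phi j \<theta>)))"
      unfolding Hs_def inner using False by (simp add: axis_def)
    have "((\<lambda>s. Hs \<theta> (r + s *\<^sub>R axis i 1)) has_field_derivative \<omega> $ i) (at 0)"
      unfolding e by (auto intro!: derivative_eq_intros)
    then show ?thesis using False unfolding grad_r_def grad_def by (simp add: DERIV_imp_deriv)
  next
    case True
    define f where "f n s = c n * (r $ l + s)^(n+2) * sin (phi n \<theta>)" for n s
    define f' where "f' n s = c n * (real n + 2) * (r $ l + s)^(n+1) * sin (phi n \<theta>)" for n s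
    define R where "R = \<bar>r $ l\<bar> + 1"
    have R0: "0 \<le> R" unfolding R_def by simp
    have e: "(\<lambda>s. Hs \<theta> (r + s *\<^sub>R axis i 1)) = (\<lambda>s. \<omega> \<bullet> r + s * \<omega> $ i + (\<Sum>n. f n s))"
      unfolding Hs_def inner f_def using True by (simp add: axis_def)
    have "((\<lambda>s. \<Sum>n. f n s) has_field_derivative (\<Sum>n. f' n 0)) (at 0)"
    proof (rule real_series_deriv[where M="\<lambda>n. R * (c n * (real n + 3) * R^n * nK (K n))"])
      show "(f n has_field_derivative f' n t) (at t)" for n and t :: real
      proof -
        have p: "((\<lambda>s. (r$l+s)^(n+2)) has_field_derivative (real (n+2) * (r$l+t)^(n+2 - Suc 0)) * (0 + 1)) (at t)"
          by (rule DERIV_chain2[OF DERIV_pow DERIV_add[OF DERIV_const DERIV_ident]])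
        have "(f n has_field_derivative c n * ((real (n+2) * (r$l+t)^(n+2 - Suc 0)) * (0 + 1)) * sin (phi n \<theta>)) (at t)"
          unfolding f_def by (intro DERIV_cmult DERIV_cmult_right p)
        then show ?thesis unfolding f'_def by (rule DERIV_cong) (simp add: algebra_simps)
      qed
      show "summable (\<lambda>n. f n 0)" unfolding f_def using Hs_series_summable by simp
      show "summable (\<lambda>n. R * (c n * (real n + 3) * R^n * nK (K n)))"
        by (intro summable_mult sumc R0)
      fix n and t :: real assume t: "\<bar>t - 0\<bar> \<le> 1"
      have rt: "\<bar>r $ l + t\<bar> \<le> R" unfolding R_def using t by linarith
      have "\<bar>f' n t\<bar> = c n * (real n + 2) * \<bar>r $ l + t\<bar>^(n+1) * \<bar>sin (phi n \<theta>)\<bar>"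
        unfolding f'_def using cpos[of n] by (simp add: abs_mult power_abs)
      also have "\<dots> \<le> c n * ((real n + 3) * nK (K n)) * R^(n+1) * 1"
      proof (intro mult_mono mult_left_mono)
        have "(real n + 2) * 1 \<le> (real n + 3) * nK (K n)" using nK1[of n] by (intro mult_mono) auto
        then show "real n + 2 \<le> (real n + 3) * nK (K n)" by simp
        show "\<bar>r $ l + t\<bar>^(n+1) \<le> R^(n+1)" using rt by (intro power_mono) auto
      qed (use cpos[of n] rt R0 nK1[of n] in \<open>auto\<close>)
      also have "\<dots> = R * (c n * (real n + 3) * R^n * nK (K n))" by (simp add: algebra_simps)
      finally show "\<bar>f' n t\<bar> \<le> R * (c n * (real n + 3) * R^n * nK (K n))" .
    qed
    then have "((\<lambda>s. Hs \<theta> (r + s *\<^sub>R axis i 1)) has_field_derivative \<omega> $ i + (\<Sum>n. f' n 0)) (at 0)"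
      unfolding e by (auto intro!: derivative_eq_intros)
    then show ?thesis using True unfolding grad_r_def grad_def f'_def by (simp add: DERIV_imp_deriv)
  qed
qed

lemma sumc0: "summable c"
proof (rule sumc_cmp[of 1 _ 1])
  fix j
  have "1 * 1 \<le> (real j + 3) * nK (K j)" using nK1[of j] by (intro mult_mono) auto
  then have "c j * 1 \<le> c j * ((real j + 3) * nK (K j))" using cpos[of j] by (intro mult_left_mono) auto
  then show "\<bar>c j\<bar> \<le> 1 * (c j * (real j + 3) * 1 ^ j * nK (K j))" using cpos[of j] by (simp add: ac_simps)
qed simp

lemma abs_rl_le: "\<bar>r $ l\<bar> \<le> norm r"
  using component_le_norm_cart[of r l] by simp

lemma Hs_quad: "\<exists>C \<delta>. \<delta> > 0 \<and> (\<forall>\<theta> r. norm r < \<delta> \<longrightarrow> \<bar>Hs \<theta> r - \<omega> \<bullet> r\<bar> \<le> C * (norm r)\<^sup>2)"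
proof (intro exI conjI allI impI)
  show "(0::real) < 1" by simp
  fix \<theta> and r :: "real^'n" assume r: "norm r < 1"
  have rl: "\<bar>r $ l\<bar> \<le> 1" using abs_rl_le[of r] r by linarith
  have b: "\<bar>c j * (r $ l)^(j+2) * sin (phi j \<theta>)\<bar> \<le> c j * (r $ l)^2" for j
  proof -
    have "\<bar>c j * (r $ l)^(j+2) * sin (phi j \<theta>)\<bar> = c j * ((r $ l)^2 * \<bar>r $ l\<bar>^j) * \<bar>sin (phi j \<theta>)\<bar>"
      using cpos[of j] by (simp add: abs_mult power_abs power_add power2_eq_square)
    also have "\<dots> \<le> c j * ((r $ l)^2 * 1) * 1"
      using cpos[of j] rl by (intro mult_mono mult_left_mono power_le_one) auto
    finally show ?thesis by simp
  qed
  have "\<bar>Hs \<theta> r - \<omega> \<bullet> r\<bar> = norm (\<Sum>j. c j * (r $ l)^(j+2) * sin (phi j \<theta>))"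
    unfolding Hs_def by simp
  also have "\<dots> \<le> (\<Sum>j. c j * (r $ l)^2)"
    by (rule norm_suminf_le) (use b summable_mult2[OF sumc0] in auto)
  also have "\<dots> = (\<Sum>j. c j) * (r $ l)^2" by (rule suminf_mult2[symmetric, OF sumc0])
  also have "\<dots> \<le> (\<Sum>j. c j) * (norm r)^2"
  proof -
    have "(r $ l)^2 \<le> (norm r)^2" using abs_rl_le[of r] by (metis abs_ge_zero power2_abs power_mono)
    moreover have "0 \<le> (\<Sum>j. c j)" using sumc0 cpos by (intro suminf_nonneg) (auto simp: less_imp_le)
    ultimately show ?thesis by (intro mult_left_mono)
  qed
  finally show "\<bar>Hs \<theta> r - \<omega> \<bullet> r\<bar> \<le> (\<Sum>j. c j) * (norm r)^2" .
qed

lemma lamj_abs: "\<bar>lamj j\<bar> = (c j)^2" unfolding lamj_def using lam by simp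
lemma lamj_nz: "lamj j \<noteq> 0" using lamj_abs[of j] cpos[of j] by auto

definition ea :: "nat \<Rightarrow> 'n \<Rightarrow> nat" where "ea j = (\<lambda>m. if m = l then j + 2 else 0)"
definition isE :: "('n \<Rightarrow> nat) \<Rightarrow> bool" where "isE \<alpha> \<longleftrightarrow> 2 \<le> \<alpha> l \<and> \<alpha> = ea (\<alpha> l - 2)"
definition acoj :: "nat \<Rightarrow> real^'n \<Rightarrow> real" where
  "acoj j \<theta> = (c j / (2 * pi * lamj j)) * cos (phi j \<theta>)"
definition aco :: "('n \<Rightarrow> nat) \<Rightarrow> real^'n \<Rightarrow> real" where
  "aco \<alpha> = (if isE \<alpha> then acoj (\<alpha> l - 2) else (\<lambda>_. 0))"

lemma ea_l [simp]: "ea j l = j + 2" unfolding ea_def by simp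
lemma isE_ea: "isE (ea j)" unfolding isE_def by simp
lemma aco_ea: "aco (ea j) = acoj j" unfolding aco_def using isE_ea[of j] by simp
lemma isE_D: "isE \<alpha> \<Longrightarrow> \<exists>j. \<alpha> = ea j" unfolding isE_def by blast
lemma aco_not: "\<not> isE \<alpha> \<Longrightarrow> aco \<alpha> = (\<lambda>_. 0)" unfolding aco_def by simp
lemma inj_ea: "inj ea" by (rule injI) (metis ea_l add_right_cancel)

lemma mdeg_ea: "mdeg (ea j) = j + 2"
  unfolding mdeg_def ea_def by (simp add: sum.delta)

lemma monom_ea: "monom (ea j) r = (r $ l)^(j+2)"
proof -
  have "monom (ea j) r = (\<Prod>m\<in>UNIV. if m = l then (r $ l)^(j+2) else 1)"
    unfolding monom_def ea_def by (intro prod.cong) auto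
  also have "\<dots> = (r $ l)^(j+2)" by (simp add: prod.delta)
  finally show ?thesis .
qed

lemma grad_zero: "grad (\<lambda>_. 0) \<theta> = 0"
  unfolding grad_def by (simp add: vec_eq_iff)

lemma grad_acoj: "grad (acoj j) \<theta> $ i = - (c j * sin (phi j \<theta>) * of_int (K j $ i) / lamj j)"
proof -
  have e: "(\<lambda>s. acoj j (\<theta> + s *\<^sub>R axis i 1)) = (\<lambda>s. (c j / (2 * pi * lamj j)) * cos (phi j \<theta> + 2 * pi * of_int (K j $ i) * s))"
    unfolding acoj_def by (simp add: phi_shift)
  have "((\<lambda>s. acoj j (\<theta> + s *\<^sub>R axis i 1)) has_field_derivative
        (c j / (2 * pi * lamj j)) * (- sin (phi j \<theta> + 2 * pi * of_int (K j $ i) * 0) * (2 * pi * of_int (K j $ i)))) (at 0)"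
    unfolding e by (rule DERIV_cmult derivative_eq_intros refl | simp)+
  then have "deriv (\<lambda>s. acoj j (\<theta> + s *\<^sub>R axis i 1)) 0 = (c j / (2 * pi * lamj j)) * (- sin (phi j \<theta>) * (2 * pi * of_int (K j $ i)))"
    by (simp add: DERIV_imp_deriv)
  also have "\<dots> = - (c j * sin (phi j \<theta>) * of_int (K j $ i) / lamj j)"
    using lamj_nz[of j] by (simp add: field_simps)
  finally show ?thesis unfolding grad_def by simp
qed

lemma grad_acoj_l: "grad (acoj j) \<theta> $ l = 0"
  using grad_acoj[of j \<theta> l] Kl[of j] by simp

lemma phic_cmul: "phic j (cmul a v) = a * phic j v"
  unfolding phic_def cmul_def by (simp add: sum_distrib_left algebra_simps)

lemma acoj_analytic: "real_analytic_vec (acoj j)"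
  unfolding real_analytic_vec_def
proof (intro exI conjI allI)
  define G where "G z = of_real (c j / (2 * pi * lamj j)) * cos (phic j z)" for z
  show "open (UNIV :: (complex^'n) set)" by simp
  show "cvec \<theta> \<in> UNIV" for \<theta> :: "real^'n" by simp
  show "G (cvec \<theta>) = of_real (acoj j \<theta>)" for \<theta>
    unfolding G_def acoj_def by (simp add: phic_cvec cos_of_real)
  show "holo_on_vec G UNIV"
    unfolding holo_on_vec_def
  proof (intro ballI exI conjI allI)
    fix z :: "complex^'n"
    have d1: "(phic j has_derivative phic j) (at z)"
      by (rule bounded_linear_imp_has_derivative[OF bl_phic])
    show "(G has_derivative (\<lambda>h. of_real (c j / (2 * pi * lamj j)) * (phic j h * - sin (phic j z)))) (at z)"
      unfolding G_def by (intro has_derivative_mult_right cos_comp_deriv d1)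
    fix a v
    show "of_real (c j / (2 * pi * lamj j)) * (phic j (cmul a v) * - sin (phic j z)) =
          a * (of_real (c j / (2 * pi * lamj j)) * (phic j v * - sin (phic j z)))"
      by (simp add: phic_cmul algebra_simps)
  qed
qed

lemma zero_analytic: "real_analytic_vec (\<lambda>_::real^'n. 0)"
  unfolding real_analytic_vec_def holo_on_vec_def
  by (rule exI[of _ UNIV], rule exI[of _ "\<lambda>_. 0"]) (auto intro!: exI[of _ "\<lambda>_. 0"])

lemma acoj_periodic: "periodic_theta (acoj j)"
  unfolding periodic_theta_def acoj_def by (simp add: phi_shift1 cos_shift_int)

lemma aco_props: "real_analytic_vec (aco \<alpha>) \<and> periodic_theta (aco \<alpha>)"
  unfolding aco_def using acoj_analytic acoj_periodic zero_analytic
  by (auto simp: periodic_theta_def)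

lemma aco_low: "mdeg \<alpha> \<le> 1 \<Longrightarrow> aco \<alpha> = (\<lambda>_. 0)"
  using isE_D mdeg_ea aco_not by fastforce

lemma finite_mdeg: "finite {\<alpha> :: 'n \<Rightarrow> nat. mdeg \<alpha> \<le> n}"
proof (rule finite_subset)
  show "{\<alpha> :: 'n \<Rightarrow> nat. mdeg \<alpha> \<le> n} \<subseteq> PiE UNIV (\<lambda>_. {..n})"
  proof
    fix \<alpha> :: "'n \<Rightarrow> nat" assume "\<alpha> \<in> {\<alpha>. mdeg \<alpha> \<le> n}"
    then have "\<alpha> m \<le> n" for m
      unfolding mdeg_def using member_le_sum[of m UNIV \<alpha>] by auto
    then show "\<alpha> \<in> PiE UNIV (\<lambda>_. {..n})" by auto
  qed
  show "finite (PiE (UNIV::'n set) (\<lambda>_. {..n}))" by (intro finite_PiE) auto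
qed

lemma trunc_eq: "dtheta_trunc aco n \<theta> r = (\<Sum>j<n-1. (r $ l)^(j+2) *\<^sub>R grad (acoj j) \<theta>)"
proof -
  let ?S = "{\<alpha> :: 'n \<Rightarrow> nat. mdeg \<alpha> \<le> n}"
  let ?g = "\<lambda>\<alpha>. monom \<alpha> r *\<^sub>R grad (aco \<alpha>) \<theta>"
  have sub: "ea ` {..<n-1} \<subseteq> ?S" using mdeg_ea by auto
  have "sum ?g ?S = sum ?g (ea ` {..<n-1})"
  proof (rule sum.mono_neutral_right[OF finite_mdeg sub], rule ballI)
    fix \<alpha> assume a: "\<alpha> \<in> ?S - ea ` {..<n-1}"
    have "\<not> isE \<alpha>"
    proof
      assume "isE \<alpha>"
      then obtain j where j: "\<alpha> = ea j" using isE_D by blast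
      then have "j + 2 \<le> n" using a mdeg_ea[of j] by auto
      then have "j \<in> {..<n-1}" by auto
      then show False using a j by auto
    qed
    then show "?g \<alpha> = 0" by (simp add: aco_not grad_zero)
  qed
  also have "\<dots> = (\<Sum>j<n-1. ?g (ea j))"
    using sum.reindex[OF inj_on_subset[OF inj_ea subset_UNIV], of ?g "{..<n-1}"] by (simp add: comp_def)
  finally show ?thesis unfolding dtheta_trunc_def by (simp add: aco_ea monom_ea)
qed

lemma trunc_l: "dtheta_trunc aco n \<theta> r $ l = 0"
  unfolding trunc_eq by (simp add: grad_acoj_l)

lemma omega_grad_acoj: "\<omega> \<bullet> grad (acoj j) \<theta> = - (c j * sin (phi j \<theta>))"
proof -
  have "\<omega> \<bullet> grad (acoj j) \<theta> = (\<Sum>i\<in>UNIV. \<omega> $ i * - (c j * sin (phi j \<theta>) * of_int (K j $ i) / lamj j))"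
    unfolding inner_vec_def by (simp add: grad_acoj)
  also have "\<dots> = (\<Sum>i\<in>UNIV. - (c j * sin (phi j \<theta>) / lamj j) * (of_int (K j $ i) * \<omega> $ i))"
    by (intro sum.cong) (auto simp: field_simps)
  also have "\<dots> = - (c j * sin (phi j \<theta>) / lamj j) * (\<Sum>i\<in>UNIV. of_int (K j $ i) * \<omega> $ i)"
    by (rule sum_distrib_left[symmetric])
  also have "\<dots> = - (c j * sin (phi j \<theta>))" using lamj_nz[of j] unfolding lamj_def[symmetric] by simp
  finally show ?thesis .
qed

lemma is_BNF_Hs: "is_BNF Hs (\<lambda>r. \<omega> \<bullet> r)"
  unfolding is_BNF_def
proof (rule exI[of _ aco], intro conjI allI impI)
  show "real_analytic_vec (aco \<alpha>)" "periodic_theta (aco \<alpha>)" for \<alpha> using aco_props by auto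
  show "mdeg \<alpha> \<le> 1 \<Longrightarrow> aco \<alpha> = (\<lambda>_. 0)" for \<alpha> by (rule aco_low)
  fix n \<theta>
  define N :: nat where "N = n - 1"
  define a where "a j r = c j * (r $ l)^(j+2) * sin (phi j \<theta>)" for j and r :: "real^'n"
  have sN: "summable (\<lambda>k. c (k + N))" using sumc0 by (rule summable_ignore_initial_segment)
  show "\<exists>C \<delta>. \<delta> > 0 \<and> (\<forall>r. norm r < \<delta> \<longrightarrow> \<bar>Hs \<theta> (r + dtheta_trunc aco n \<theta> r) - \<omega> \<bullet> r\<bar> \<le> C * norm r ^ (n + 1))"
  proof (rule exI[of _ "\<Sum>k. c (k + N)"], rule exI[of _ 1], intro conjI allI impI)
    show "(0::real) < 1" by simp
    fix r :: "real^'n" assume r: "norm r < 1"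
    have rl: "\<bar>r $ l\<bar> \<le> 1" using abs_rl_le[of r] r by linarith
    let ?v = "dtheta_trunc aco n \<theta> r"
    have vl: "(r + ?v) $ l = r $ l" using trunc_l by simp
    have ov: "\<omega> \<bullet> ?v = - (\<Sum>j<N. a j r)"
      unfolding trunc_eq N_def a_def
      by (simp add: inner_sum_right omega_grad_acoj sum_negf algebra_simps)
    have sa: "summable (\<lambda>j. a j r)" unfolding a_def by (rule Hs_series_summable)
    have "Hs \<theta> (r + ?v) - \<omega> \<bullet> r = (\<Sum>j. a j r) - (\<Sum>j<N. a j r)"
      unfolding Hs_def vl a_def[symmetric] using ov by (simp add: inner_add_right)
    also have "\<dots> = (\<Sum>k. a (k + N) r)" using suminf_split_initial_segment[OF sa, of N] by simp
    finally have eq: "Hs \<theta> (r + ?v) - \<omega> \<bullet> r = (\<Sum>k. a (k + N) r)" .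
    have b: "\<bar>a (k + N) r\<bar> \<le> c (k + N) * norm r ^ (n+1)" for k
    proof -
      have "\<bar>a (k + N) r\<bar> \<le> c (k + N) * \<bar>r $ l\<bar>^(k + N + 2) * 1"
        unfolding a_def using cpos[of "k+N"] by (simp add: abs_mult power_abs) (intro mult_left_mono mult_right_le_one_le, auto)
      also have "\<dots> \<le> c (k + N) * \<bar>r $ l\<bar>^(n+1)"
        using cpos[of "k+N"] rl power_decreasing[of "n+1" "k+N+2" "\<bar>r $ l\<bar>"]
        by (simp add: N_def)
      also have "\<dots> \<le> c (k + N) * norm r ^(n+1)"
        using cpos[of "k+N"] abs_rl_le[of r] by (intro mult_left_mono power_mono) auto
      finally show ?thesis .
    qed
    have "\<bar>Hs \<theta> (r + ?v) - \<omega> \<bullet> r\<bar> \<le> (\<Sum>k. c (k + N) * norm r ^ (n+1))"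
      unfolding eq real_norm_def[symmetric] by (rule norm_suminf_le) (use b summable_mult2[OF sN] in auto)
    also have "\<dots> = (\<Sum>k. c (k + N)) * norm r ^ (n+1)" by (rule suminf_mult2[symmetric, OF sN])
    finally show "\<bar>Hs \<theta> (r + ?v) - \<omega> \<bullet> r\<bar> \<le> (\<Sum>k. c (k + N)) * norm r ^ (n+1)" .
  qed
qed

definition prev :: "nat \<Rightarrow> real" where "prev j = (if j = 0 then 1 else (c (j-1))^2)"

lemma c_le1: "c j \<le> 1"
proof -
  have "0 \<le> (real j+1) * (nK (K j) + real j + 1)" using nK1[of j] by (intro mult_nonneg_nonneg) auto
  then have "-(real j+1) * (nK (K j) + real j + 1) \<le> 0" by (simp only: mult_minus_left)
  then show ?thesis using P4[of j] by (meson exp_le_one_iff order_trans)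
qed

lemma prev_pos: "0 < prev j" unfolding prev_def using cpos[of "j-1"] by simp
lemma prev_le1: "prev j \<le> 1"
  unfolding prev_def using c_le1 cpos by (simp add: power_le_one less_imp_le)

lemma P5': "c j * nK (K j) \<le> prev j * exp (-(real j * (real j + 2)))"
  using P5[of j] unfolding prev_def .
lemma P6': "c j * exp (real j * (real j + 2)) * (1 + real j / prev j) \<le> 1"
  using P6[of j] unfolding prev_def .

lemma cnK_prev: "c j * nK (K j) \<le> prev j"
proof -
  have "exp (-(real j * (real j + 2))) \<le> 1" by simp
  then show ?thesis using P5'[of j] prev_pos[of j] by (meson mult_left_le order_trans less_imp_le)
qed

lemma c_Suc: "c (Suc j) \<le> c j"
proof -
  have "c (Suc j) \<le> c (Suc j) * nK (K (Suc j))" using le_mult_ge1[of "c (Suc j)" "nK (K (Suc j))"] cpos nK1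
    by (simp add: less_imp_le mult.commute)
  also have "\<dots> \<le> prev (Suc j)" by (rule cnK_prev)
  also have "\<dots> = c j * c j" unfolding prev_def by (simp add: power2_eq_square)
  also have "\<dots> \<le> c j * 1" using c_le1[of j] cpos[of j] by (intro mult_left_mono) auto
  finally show ?thesis by simp
qed

lemma c_anti: "j \<le> k \<Longrightarrow> c k \<le> c j"
  by (induction k rule: dec_induct) (use c_Suc order_trans in auto)

lemma lamj_sq: "\<bar>lamj j\<bar> = (c j)^2" by (rule lamj_abs)

definition Dj :: "real^'n \<Rightarrow> nat \<Rightarrow> real \<Rightarrow> real" where
  "Dj \<theta>0 j t = (sin (phi j \<theta>0 + 2 * pi * lamj j * t) - sin (phi j \<theta>0)) / lamj j"
definition Rterm :: "real^'n \<Rightarrow> real \<Rightarrow> 'n \<Rightarrow> nat \<Rightarrow> real \<Rightarrow> real" where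
  "Rterm \<theta>0 s i j t = c j * s^(j+2) * of_int (K j $ i) * Dj \<theta>0 j t"
definition Rser :: "real^'n \<Rightarrow> real \<Rightarrow> 'n \<Rightarrow> real \<Rightarrow> real" where
  "Rser \<theta>0 s i t = (\<Sum>j. Rterm \<theta>0 s i j t)"

lemma Dj_bound1: "\<bar>Dj \<theta>0 j t\<bar> \<le> 2 * pi * \<bar>t\<bar>"
proof -
  have "\<bar>sin (phi j \<theta>0 + 2 * pi * lamj j * t) - sin (phi j \<theta>0)\<bar> \<le> \<bar>2 * pi * lamj j * t\<bar>"
    using abs_sin_diff_le[of "phi j \<theta>0 + 2 * pi * lamj j * t" "phi j \<theta>0"] by simp
  then show ?thesis unfolding Dj_def using lamj_nz[of j]
    by (simp add: abs_mult divide_le_eq mult.commute mult.left_commute)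
qed

lemma Dj_bound2: "\<bar>Dj \<theta>0 j t\<bar> \<le> 2 / (c j)^2"
proof -
  have "\<bar>sin (phi j \<theta>0 + 2 * pi * lamj j * t) - sin (phi j \<theta>0)\<bar> \<le> 2"
    using abs_sin_le_one[of "phi j \<theta>0 + 2 * pi * lamj j * t"] abs_sin_le_one[of "phi j \<theta>0"] by linarith
  then show ?thesis unfolding Dj_def abs_divide lamj_sq using cpos[of j]
    by (intro divide_right_mono) auto
qed

lemma Rterm_bound1: "\<bar>Rterm \<theta>0 s i j t\<bar> \<le> c j * \<bar>s\<bar>^(j+2) * nK (K j) * (2 * pi * \<bar>t\<bar>)"
  unfolding Rterm_def abs_mult using cpos[of j] comp_le_nK[of "K j" i] Dj_bound1
  by (intro mult_mono) (auto simp: power_abs abs_mult)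

lemma Rterm_summable: "summable (\<lambda>j. Rterm \<theta>0 s i j t)"
proof (rule sumc_cmp[of "\<bar>s\<bar>" _ "2 * pi * \<bar>t\<bar> * s^2"])
  fix j
  have "c j * \<bar>s\<bar>^(j+2) * nK (K j) * (2 * pi * \<bar>t\<bar>) \<le> 2 * pi * \<bar>t\<bar> * s^2 * (c j * (real j + 3) * \<bar>s\<bar>^j * nK (K j))"
  proof -
    have e: "\<bar>s\<bar>^(j+2) = s^2 * \<bar>s\<bar>^j" by (simp only: power_add power2_abs mult.commute)
    have "c j * \<bar>s\<bar>^(j+2) * nK (K j) * (2 * pi * \<bar>t\<bar>) = (2 * pi * \<bar>t\<bar> * s^2) * (c j * 1 * \<bar>s\<bar>^j * nK (K j))"
      unfolding e by (simp add: algebra_simps)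
    also have "\<dots> \<le> (2 * pi * \<bar>t\<bar> * s^2) * (c j * (real j + 3) * \<bar>s\<bar>^j * nK (K j))"
      using cpos[of j] nK1[of j] by (intro mult_left_mono mult_right_mono) auto
    finally show ?thesis .
  qed
  then show "\<bar>Rterm \<theta>0 s i j t\<bar> \<le> 2 * pi * \<bar>t\<bar> * s^2 * (c j * (real j + 3) * \<bar>s\<bar>^j * nK (K j))"
    using Rterm_bound1[of \<theta>0 s i j t] by linarith
qed simp

lemma exists_max_comp: "\<exists>i. real_of_int \<bar>K j $ i\<bar> = nK (K j)"
proof -
  have "Max ((\<lambda>m. \<bar>K j $ m\<bar>) ` UNIV) \<in> (\<lambda>m. \<bar>K j $ m\<bar>) ` UNIV" by (rule Max_in) auto
  then obtain i where "Max ((\<lambda>m. \<bar>K j $ m\<bar>) ` UNIV) = \<bar>K j $ i\<bar>" by (auto simp del: Max_in)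
  then show ?thesis unfolding nK_def supnorm_int_def by (intro exI[of _ i]) simp
qed

lemma unbounded:
  assumes s: "s \<noteq> 0"
  shows "\<exists>t\<ge>T. \<exists>i. i \<noteq> l \<and> B < \<bar>r0 $ i - Rser \<theta>0 s i t\<bar>"
proof -
  define Q where "Q = max 1 \<bar>s\<bar>"
  define T' where "T' = max T 0"
  have Q1: "1 \<le> Q" and sQ: "\<bar>s\<bar> \<le> Q" unfolding Q_def by auto
  have sp: "0 < \<bar>s\<bar>" using s by simp
  have T'0: "0 \<le> T'" and TT': "T \<le> T'" unfolding T'_def by auto
  obtain m :: nat where m: "real m \<ge> max (max 1 (ln (2 * Q / \<bar>s\<bar>))) (max (ln (2 * Q)) (B + norm r0 + 4 * pi * (T' + 1)))"
    using real_arch_simple by blast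
  have m1: "1 \<le> m" using m by simp
  have em1: "2 * Q \<le> \<bar>s\<bar> * exp (real m)"
  proof -
    have l: "ln (2 * Q / \<bar>s\<bar>) \<le> real m" using m by simp
    have p: "0 < 2 * Q / \<bar>s\<bar>" using Q1 sp by simp
    have "2 * Q / \<bar>s\<bar> \<le> exp (real m)"
      using exp_le_cancel_iff[THEN iffD2, OF l] exp_ln[OF p] by simp
    then show ?thesis using sp by (simp add: divide_le_eq mult.commute)
  qed
  have em2: "2 * Q \<le> exp (real m)"
  proof -
    have l: "ln (2 * Q) \<le> real m" using m by simp
    have p: "0 < 2 * Q" using Q1 by simp
    show ?thesis using exp_le_cancel_iff[THEN iffD2, OF l] exp_ln[OF p] by simp
  qed
  have mB: "B + norm r0 + 4 * pi * (T' + 1) \<le> real m" using m by simp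
  obtain i where iK: "real_of_int \<bar>K m $ i\<bar> = nK (K m)" using exists_max_comp by blast
  have il: "i \<noteq> l" using iK Kl[of m] nK1[of m] by auto
  obtain t where t: "T' \<le> t" "t \<le> T' + 1 / \<bar>lamj m\<bar>"
      "1 \<le> \<bar>sin (phi m \<theta>0 + 2 * pi * lamj m * t) - sin (phi m \<theta>0)\<bar>"
    using find_t[OF lamj_nz[of m]] by blast
  have t0: "0 \<le> t" using t T'0 by linarith
  define a where "a j = Rterm \<theta>0 s i j t" for j
  have sa: "summable a" unfolding a_def by (rule Rterm_summable)
  have split: "Rser \<theta>0 s i t = (\<Sum>k. a (k + Suc m)) + (\<Sum>j<m. a j) + a m"
    unfolding Rser_def a_def[symmetric] using suminf_split_initial_segment[OF sa, of "Suc m"] by simp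
  define X where "X = (\<bar>s\<bar> * exp (real m))^(m+2)"
  have cm: "0 < c m" using cpos by simp
  have main: "(1 + real m / prev m) * X \<le> \<bar>a m\<bar>"
  proof -
    have "\<bar>a m\<bar> = c m * \<bar>s\<bar>^(m+2) * nK (K m) * (\<bar>sin (phi m \<theta>0 + 2 * pi * lamj m * t) - sin (phi m \<theta>0)\<bar> / (c m)^2)"
      unfolding a_def Rterm_def Dj_def abs_mult abs_divide lamj_sq iK[symmetric] using cm by (simp add: power_abs abs_mult)
    also have "\<dots> \<ge> c m * \<bar>s\<bar>^(m+2) * 1 * (1 / (c m)^2)"
      using t(3) nK1[of m] cm by (intro mult_mono divide_right_mono) auto
    finally have A: "\<bar>s\<bar>^(m+2) / c m \<le> \<bar>a m\<bar>" using cm by (simp add: power2_eq_square)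
    have "exp (real m * (real m + 2)) * (1 + real m / prev m) \<le> 1 / c m"
      using P6'[of m] cm by (simp add: le_divide_eq mult.commute mult.left_commute)
    moreover have "exp (real m * (real m + 2)) = exp (real m)^(m+2)"
      using exp_of_nat_mult[of "m+2" "real m"] by (simp add: add.commute mult.commute)
    ultimately have "exp (real m)^(m+2) * (1 + real m / prev m) \<le> 1 / c m" by simp
    then have "\<bar>s\<bar>^(m+2) * (exp (real m)^(m+2) * (1 + real m / prev m)) \<le> \<bar>s\<bar>^(m+2) * (1 / c m)"
      by (intro mult_left_mono) auto
    then have "(1 + real m / prev m) * X \<le> \<bar>s\<bar>^(m+2) / c m"
      unfolding X_def by (simp add: power_mult_distrib algebra_simps)
    then show ?thesis using A by linarith
  qed
  have early: "\<bar>\<Sum>j<m. a j\<bar> \<le> real m * (2 * Q^(m+1) / prev m)"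
  proof -
    have pm: "prev m = (c (m-1))^2" unfolding prev_def using m1 by simp
    have "\<bar>a j\<bar> \<le> 2 * Q^(m+1) / prev m" if j: "j < m" for j
    proof -
      have cj: "0 < c j" using cpos by simp
      have "\<bar>a j\<bar> \<le> c j * \<bar>s\<bar>^(j+2) * nK (K j) * (2 / (c j)^2)"
        unfolding a_def Rterm_def abs_mult using cj comp_le_nK[of "K j" i] Dj_bound2[of \<theta>0 j t]
        by (intro mult_mono) (auto simp: power_abs abs_mult)
      also have "\<dots> = 2 * \<bar>s\<bar>^(j+2) * (c j * nK (K j)) / (c j)^2" by simp
      also have "\<dots> \<le> 2 * Q^(m+1) * 1 / (c (m-1))^2"
      proof (intro frac_le mult_mono)
        show "\<bar>s\<bar>^(j+2) \<le> Q^(m+1)"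
        proof -
          have "\<bar>s\<bar>^(j+2) \<le> Q^(j+2)" using sQ by (intro power_mono) auto
          also have "\<dots> \<le> Q^(m+1)" using Q1 j by (intro power_increasing) auto
          finally show ?thesis .
        qed
        show "c j * nK (K j) \<le> 1" using cnK_prev[of j] prev_le1[of j] by linarith
        show "(c (m-1))^2 \<le> (c j)^2" using c_anti[of j "m-1"] j cpos[of "m-1"] by (intro power_mono) auto
      qed (use Q1 cpos[of j] cpos[of "m-1"] nK1[of j] in auto)
      finally show ?thesis unfolding pm by simp
    qed
    then have "(\<Sum>j<m. \<bar>a j\<bar>) \<le> (\<Sum>j<m. 2 * Q^(m+1) / prev m)" by (intro sum_mono) auto
    moreover have "(\<Sum>j<m. 2 * Q^(m+1) / prev m) = real m * (2 * Q^(m+1) / prev m)" by simp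
    moreover have "\<bar>\<Sum>j<m. a j\<bar> \<le> (\<Sum>j<m. \<bar>a j\<bar>)" by (rule sum_abs)
    ultimately show ?thesis by linarith
  qed
  have tail: "\<bar>\<Sum>k. a (k + Suc m)\<bar> \<le> 2 * pi * (T' + 1) * 2"
  proof -
    have ctm: "(c m)^2 * t \<le> T' + 1"
    proof -
      have "(c m)^2 * t \<le> (c m)^2 * (T' + 1 / (c m)^2)"
        using t(2) lamj_sq[of m] by (intro mult_left_mono) auto
      also have "\<dots> = (c m)^2 * T' + 1" using cm by (simp add: algebra_simps)
      also have "\<dots> \<le> 1 * T' + 1" using c_le1[of m] cm T'0 by (intro add_mono mult_right_mono) (auto simp: power_le_one)
      finally show ?thesis by simp
    qed
    have b: "\<bar>a (k + Suc m)\<bar> \<le> 2 * pi * (T' + 1) * (1/2)^k" for k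
    proof -
      define j where "j = k + Suc m"
      have "\<bar>a j\<bar> \<le> c j * \<bar>s\<bar>^(j+2) * nK (K j) * (2 * pi * t)"
        unfolding a_def using Rterm_bound1[of \<theta>0 s i j t] t0 by simp
      also have "\<dots> = (c j * nK (K j)) * \<bar>s\<bar>^(j+2) * (2 * pi * t)" by simp
      also have "\<dots> \<le> (prev j * exp (-(real j * (real j + 2)))) * Q^(j+2) * (2 * pi * t)"
      proof -
        have A2: "\<bar>s\<bar>^(j+2) \<le> Q^(j+2)" using sQ by (intro power_mono) auto
        have p0: "0 \<le> prev j * exp (-(real j * (real j + 2)))" using prev_pos[of j] by simp
        show ?thesis
          by (rule mult_right_mono[OF mult_mono[OF P5'[of j] A2]]) (use p0 t0 in auto)
      qed
      also have "\<dots> = 2 * pi * (prev j * t) * (Q * exp (- real j))^(j+2)"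
      proof -
        have "exp (-(real j * (real j + 2))) = exp (- real j)^(j+2)"
          using exp_of_nat_mult[of "j+2" "- real j"] by (simp add: algebra_simps)
        then show ?thesis by (simp add: power_mult_distrib algebra_simps)
      qed
      also have "\<dots> \<le> 2 * pi * (T' + 1) * (1/2)^k"
      proof (intro mult_mono)
        have "prev j = (c (k + m))^2" unfolding prev_def j_def by simp
        also have "\<dots> \<le> (c m)^2" using c_anti[of m "k+m"] cpos[of "k+m"] by (intro power_mono) auto
        finally have "prev j * t \<le> (c m)^2 * t" using t0 by (intro mult_right_mono)
        then show "prev j * t \<le> T' + 1" using ctm by linarith
        have qe: "Q * exp (- real j) \<le> 1/2"
        proof -
          have "exp (real m) \<le> exp (real j)" unfolding j_def by simp
          then have "2 * Q \<le> exp (real j)" using em2 by linarith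
          then show ?thesis by (simp add: exp_minus field_simps)
        qed
        have "(Q * exp (- real j))^(j+2) \<le> (1/2)^(j+2)"
          using qe Q1 by (intro power_mono) auto
        also have "\<dots> \<le> (1/2)^k" unfolding j_def by (intro power_decreasing) auto
        finally show "(Q * exp (- real j))^(j+2) \<le> (1/2)^k" .
      qed (use T'0 prev_pos[of j] t0 Q1 in auto)
      finally show ?thesis unfolding j_def .
    qed
    have sg: "summable (\<lambda>k. 2 * pi * (T' + 1) * (1/2::real)^k)" by (intro summable_mult summable_geometric) auto
    have "\<bar>\<Sum>k. a (k + Suc m)\<bar> \<le> (\<Sum>k. 2 * pi * (T' + 1) * (1/2::real)^k)"
      unfolding real_norm_def[symmetric] by (rule norm_suminf_le) (use b sg in auto)
    also have "\<dots> = 2 * pi * (T' + 1) * 2"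
      using suminf_mult[OF summable_geometric[of "1/2::real"], of "2 * pi * (T' + 1)"] suminf_geometric[of "1/2::real"] by simp
    finally show ?thesis .
  qed
  have X2: "2 * Q^(m+1) \<le> X"
  proof -
    have "2 * Q^(m+1) \<le> (2 * Q)^(m+2)"
    proof -
      have "Q^(m+1) \<le> 2^(m+1) * Q^(m+1)" using Q1 by (intro le_mult_ge1 one_le_power) auto
      then have "2 * Q^(m+1) \<le> 2^(m+1) * Q^(m+1) * 2" by linarith
      also have "\<dots> \<le> 2^(m+1) * Q^(m+1) * (2 * Q)" using Q1 by (intro mult_left_mono) auto
      also have "\<dots> = (2 * Q)^(m+2)" by (simp add: power_mult_distrib algebra_simps)
      finally show ?thesis .
    qed
    also have "\<dots> \<le> X" unfolding X_def using em1 Q1 by (intro power_mono) auto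
    finally show ?thesis .
  qed
  have Xm: "real m < X"
  proof -
    have "real m < 2^m" using less_exp[of m] by (metis of_nat_less_iff of_nat_numeral of_nat_power)
    also have "(2::real)^m \<le> 2^(m+2)" by (intro power_increasing) auto
    also have "\<dots> \<le> (2 * Q)^(m+2)" using Q1 by (intro power_mono) auto
    also have "\<dots> \<le> X" unfolding X_def using em1 Q1 by (intro power_mono) auto
    finally show ?thesis .
  qed
  have "X \<le> \<bar>a m\<bar> - \<bar>\<Sum>j<m. a j\<bar>"
  proof -
    have "real m * (2 * Q^(m+1) / prev m) \<le> real m / prev m * X"
      using X2 prev_pos[of m] by (simp add: divide_le_eq mult_left_mono)
    then show ?thesis using main early by (simp add: algebra_simps)
  qed
  then have "X - 2 * pi * (T' + 1) * 2 \<le> \<bar>Rser \<theta>0 s i t\<bar>"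
    unfolding split using tail by linarith
  moreover have "\<bar>r0 $ i\<bar> \<le> norm r0" by (rule component_le_norm_cart)
  ultimately have "B < \<bar>r0 $ i - Rser \<theta>0 s i t\<bar>" using Xm mB by linarith
  then show ?thesis using t(1) TT' il by (intro exI[of _ t] conjI exI[of _ i]) auto
qed

definition Ej :: "real^'n \<Rightarrow> nat \<Rightarrow> real \<Rightarrow> real" where
  "Ej \<theta>0 j t = - (cos (phi j \<theta>0 + 2 * pi * lamj j * t) - cos (phi j \<theta>0)) / (2 * pi * lamj j)"
definition Tterm :: "real^'n \<Rightarrow> real \<Rightarrow> nat \<Rightarrow> real \<Rightarrow> real" where
  "Tterm \<theta>0 s j t = c j * (real j + 2) * s^(j+1) * Ej \<theta>0 j t"
definition Tser :: "real^'n \<Rightarrow> real \<Rightarrow> real \<Rightarrow> real" where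
  "Tser \<theta>0 s t = (\<Sum>j. Tterm \<theta>0 s j t)"

lemma Ej_bound: "\<bar>Ej \<theta>0 j t\<bar> \<le> \<bar>t\<bar>"
proof -
  have "\<bar>cos (phi j \<theta>0 + 2 * pi * lamj j * t) - cos (phi j \<theta>0)\<bar> \<le> \<bar>2 * pi * lamj j * t\<bar>"
    using abs_cos_diff_le[of "phi j \<theta>0 + 2 * pi * lamj j * t" "phi j \<theta>0"] by simp
  moreover have "0 < \<bar>2 * pi * lamj j\<bar>" using lamj_nz[of j] by simp
  ultimately show ?thesis unfolding Ej_def abs_divide abs_minus_cancel
    by (simp add: divide_le_eq abs_mult mult.commute mult.left_commute)
qed

lemma sumc_s1: "summable (\<lambda>n. \<bar>s\<bar> * (c n * (real n + 3) * \<bar>s\<bar>^n * nK (K n)))"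
  by (intro summable_mult sumc) auto

lemma Tterm_le: "c j * (real j + 2) * \<bar>s\<bar>^(j+1) \<le> \<bar>s\<bar> * (c j * (real j + 3) * \<bar>s\<bar>^j * nK (K j))"
proof -
  have "c j * (real j + 2) * \<bar>s\<bar>^(j+1) = \<bar>s\<bar> * (c j * (real j + 2) * \<bar>s\<bar>^j * 1)" by (simp add: algebra_simps)
  also have "\<dots> \<le> \<bar>s\<bar> * (c j * (real j + 3) * \<bar>s\<bar>^j * nK (K j))"
    using cpos[of j] nK1[of j] by (intro mult_left_mono mult_mono) auto
  finally show ?thesis .
qed

lemma Tterm_summable: "summable (\<lambda>j. Tterm \<theta>0 s j t)"
proof (rule sumc_cmp[of "\<bar>s\<bar>" _ "\<bar>t\<bar> * \<bar>s\<bar>"])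
  fix j
  have "\<bar>Tterm \<theta>0 s j t\<bar> = c j * (real j + 2) * \<bar>s\<bar>^(j+1) * \<bar>Ej \<theta>0 j t\<bar>"
    unfolding Tterm_def using cpos[of j] by (simp add: abs_mult power_abs)
  also have "\<dots> \<le> \<bar>s\<bar> * (c j * (real j + 3) * \<bar>s\<bar>^j * nK (K j)) * \<bar>t\<bar>"
    by (rule mult_mono[OF Tterm_le Ej_bound]) (use cpos[of j] nK1[of j] in \<open>auto intro!: mult_nonneg_nonneg\<close>)
  finally show "\<bar>Tterm \<theta>0 s j t\<bar> \<le> \<bar>t\<bar> * \<bar>s\<bar> * (c j * (real j + 3) * \<bar>s\<bar>^j * nK (K j))"
    by (simp add: algebra_simps)
qed simp

lemma Rser_deriv: "(Rser \<theta>0 s i has_field_derivative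
   (\<Sum>j. c j * s^(j+2) * (cos (phi j \<theta>0 + 2 * pi * lamj j * t) * (2 * pi * of_int (K j $ i))))) (at t)"
  unfolding Rser_def
proof (rule real_series_deriv[where M="\<lambda>n. 2 * pi * s^2 * (c n * (real n + 3) * \<bar>s\<bar>^n * nK (K n))"])
  show "(Rterm \<theta>0 s i n has_field_derivative c n * s^(n+2) * (cos (phi n \<theta>0 + 2 * pi * lamj n * u) * (2 * pi * of_int (K n $ i)))) (at u)" for n u
  proof -
    show ?thesis unfolding Rterm_def Dj_def using lamj_nz[of n]
      by (auto intro!: derivative_eq_intros simp: field_simps)
  qed
  show "summable (\<lambda>n. Rterm \<theta>0 s i n t)" by (rule Rterm_summable)
  show "summable (\<lambda>n. 2 * pi * s^2 * (c n * (real n + 3) * \<bar>s\<bar>^n * nK (K n)))"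
    by (intro summable_mult sumc) auto
  fix n and u :: real
  have "\<bar>c n * s^(n+2) * (cos (phi n \<theta>0 + 2 * pi * lamj n * u) * (2 * pi * of_int (K n $ i)))\<bar>
      \<le> c n * \<bar>s\<bar>^(n+2) * (1 * (2 * pi * nK (K n)))"
    using cpos[of n] comp_le_nK[of "K n" i]
    by (simp only: abs_mult power_abs abs_of_pos[OF cpos] abs_of_pos[OF pi_gt_zero] abs_numeral)
       (intro mult_left_mono mult_mono, auto)
  also have "\<dots> \<le> 2 * pi * s^2 * (c n * (real n + 3) * \<bar>s\<bar>^n * nK (K n))"
  proof -
    have e: "\<bar>s\<bar>^(n+2) = s^2 * \<bar>s\<bar>^n" by (simp only: power_add power2_abs mult.commute)
    have "c n * \<bar>s\<bar>^(n+2) * (1 * (2 * pi * nK (K n))) = 2 * pi * s^2 * (c n * 1 * \<bar>s\<bar>^n * nK (K n))"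
      unfolding e by (simp add: algebra_simps)
    also have "\<dots> \<le> 2 * pi * s^2 * (c n * (real n + 3) * \<bar>s\<bar>^n * nK (K n))"
      using cpos[of n] nK1[of n] by (intro mult_left_mono mult_right_mono) auto
    finally show ?thesis .
  qed
  finally show "\<bar>c n * s^(n+2) * (cos (phi n \<theta>0 + 2 * pi * lamj n * u) * (2 * pi * of_int (K n $ i)))\<bar>
      \<le> 2 * pi * s^2 * (c n * (real n + 3) * \<bar>s\<bar>^n * nK (K n))" .
qed

lemma Tser_deriv: "(Tser \<theta>0 s has_field_derivative
   (\<Sum>j. c j * (real j + 2) * s^(j+1) * sin (phi j \<theta>0 + 2 * pi * lamj j * t))) (at t)"
  unfolding Tser_def
proof (rule real_series_deriv[where M="\<lambda>n. \<bar>s\<bar> * (c n * (real n + 3) * \<bar>s\<bar>^n * nK (K n))"])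
  show "(Tterm \<theta>0 s n has_field_derivative c n * (real n + 2) * s^(n+1) * sin (phi n \<theta>0 + 2 * pi * lamj n * u)) (at u)" for n u
  proof -
    show ?thesis unfolding Tterm_def Ej_def using lamj_nz[of n]
      by (auto intro!: derivative_eq_intros simp: field_simps)
  qed
  show "summable (\<lambda>n. Tterm \<theta>0 s n t)" by (rule Tterm_summable)
  show "summable (\<lambda>n. \<bar>s\<bar> * (c n * (real n + 3) * \<bar>s\<bar>^n * nK (K n)))" by (rule sumc_s1)
  fix n and u :: real
  have "\<bar>c n * (real n + 2) * s^(n+1) * sin (phi n \<theta>0 + 2 * pi * lamj n * u)\<bar> \<le> c n * (real n + 2) * \<bar>s\<bar>^(n+1) * 1"
    using cpos[of n] by (simp add: abs_mult power_abs) (intro mult_left_mono mult_right_le_one_le, auto)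
  then show "\<bar>c n * (real n + 2) * s^(n+1) * sin (phi n \<theta>0 + 2 * pi * lamj n * u)\<bar> \<le> \<bar>s\<bar> * (c n * (real n + 3) * \<bar>s\<bar>^n * nK (K n))"
    using Tterm_le[of n s] by linarith
qed

lemma Rser_l: "Rser \<theta>0 s l t = 0" unfolding Rser_def Rterm_def by (simp add: Kl)
lemma Rser0: "Rser \<theta>0 s i 0 = 0" unfolding Rser_def Rterm_def Dj_def by simp
lemma Tser0: "Tser \<theta>0 s 0 = 0" unfolding Tser_def Tterm_def Ej_def by simp

lemma phi_traj:
  assumes "\<And>m. m \<noteq> l \<Longrightarrow> \<theta> $ m = \<theta>0 $ m + \<omega> $ m * t"
  shows "phi j \<theta> = phi j \<theta>0 + 2 * pi * lamj j * t"
proof -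
  have "(\<Sum>m\<in>UNIV. of_int (K j $ m) * \<theta> $ m) = (\<Sum>m\<in>UNIV. of_int (K j $ m) * \<theta>0 $ m + t * (of_int (K j $ m) * \<omega> $ m))"
  proof (rule sum.cong)
    fix m :: 'n
    show "of_int (K j $ m) * \<theta> $ m = of_int (K j $ m) * \<theta>0 $ m + t * (of_int (K j $ m) * \<omega> $ m)"
      by (cases "m = l") (simp_all add: Kl assms algebra_simps)
  qed simp
  then show ?thesis unfolding phi_def lamj_def by (simp add: sum.distrib sum_distrib_left algebra_simps)
qed

definition TH :: "real^'n \<Rightarrow> real^'n \<Rightarrow> real \<Rightarrow> real^'n" where
  "TH \<theta>0 r0 t = (\<chi> m. \<theta>0 $ m + \<omega> $ m * t + (if m = l then Tser \<theta>0 (r0 $ l) t else 0))"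
definition RR :: "real^'n \<Rightarrow> real^'n \<Rightarrow> real \<Rightarrow> real^'n" where
  "RR \<theta>0 r0 t = (\<chi> m. r0 $ m - Rser \<theta>0 (r0 $ l) m t)"

lemma traj_ok: "ham_traj Hs (\<theta>0, r0) (\<lambda>t. (TH \<theta>0 r0 t, RR \<theta>0 r0 t))"
  unfolding ham_traj_def
proof (intro conjI allI impI)
  show "(TH \<theta>0 r0 0, RR \<theta>0 r0 0) = (\<theta>0, r0)"
    unfolding TH_def RR_def by (simp add: Tser0 Rser0 vec_eq_iff)
  fix t :: real assume t: "0 \<le> t"
  define s where "s = r0 $ l"
  have rl: "RR \<theta>0 r0 t $ l = s" unfolding RR_def s_def by (simp add: Rser_l)
  have ph: "phi j (TH \<theta>0 r0 t) = phi j \<theta>0 + 2 * pi * lamj j * t" for j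
    by (rule phi_traj) (simp add: TH_def)
  have G1: "grad_r Hs (TH \<theta>0 r0 t) (RR \<theta>0 r0 t) = (\<chi> m. \<omega> $ m + (if m = l then (\<Sum>j. c j * (real j + 2) * s^(j+1) * sin (phi j \<theta>0 + 2 * pi * lamj j * t)) else 0))"
    by (simp add: vec_eq_iff grad_r_Hs rl ph)
  have G2: "- grad_theta Hs (TH \<theta>0 r0 t) (RR \<theta>0 r0 t) = (\<chi> m. - (\<Sum>j. c j * s^(j+2) * (cos (phi j \<theta>0 + 2 * pi * lamj j * t) * (2 * pi * of_int (K j $ m)))))"
    by (simp add: vec_eq_iff grad_theta_Hs rl ph)
  have d1: "(TH \<theta>0 r0 has_vector_derivative (\<chi> m. \<omega> $ m + (if m = l then (\<Sum>j. c j * (real j + 2) * s^(j+1) * sin (phi j \<theta>0 + 2 * pi * lamj j * t)) else 0))) (at t within {0..})"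
    unfolding TH_def[abs_def]
  proof (rule vec_lambda_vd)
    fix m
    show "((\<lambda>t. \<theta>0 $ m + \<omega> $ m * t + (if m = l then Tser \<theta>0 (r0 $ l) t else 0)) has_vector_derivative
       \<omega> $ m + (if m = l then (\<Sum>j. c j * (real j + 2) * s^(j+1) * sin (phi j \<theta>0 + 2 * pi * lamj j * t)) else 0)) (at t within {0..})"
      unfolding has_real_derivative_iff_has_vector_derivative[symmetric] s_def
      by (cases "m = l") (auto intro!: derivative_eq_intros DERIV_chain2[OF _ Tser_deriv] has_field_derivative_at_within[OF Tser_deriv])
  qed
  have d2: "(RR \<theta>0 r0 has_vector_derivative (\<chi> m. - (\<Sum>j. c j * s^(j+2) * (cos (phi j \<theta>0 + 2 * pi * lamj j * t) * (2 * pi * of_int (K j $ m)))))) (at t within {0..})"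
    unfolding RR_def[abs_def]
  proof (rule vec_lambda_vd)
    fix m
    show "((\<lambda>t. r0 $ m - Rser \<theta>0 (r0 $ l) m t) has_vector_derivative
       - (\<Sum>j. c j * s^(j+2) * (cos (phi j \<theta>0 + 2 * pi * lamj j * t) * (2 * pi * of_int (K j $ m))))) (at t within {0..})"
      unfolding has_real_derivative_iff_has_vector_derivative[symmetric] s_def
      using has_field_derivative_at_within[OF Rser_deriv, of \<theta>0 "r0 $ l" m t "{0..}"]
      by (auto intro!: derivative_eq_intros)
  qed
  show "((\<lambda>t. (TH \<theta>0 r0 t, RR \<theta>0 r0 t)) has_vector_derivative
      (grad_r Hs (fst (TH \<theta>0 r0 t, RR \<theta>0 r0 t)) (snd (TH \<theta>0 r0 t, RR \<theta>0 r0 t)),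
       - grad_theta Hs (fst (TH \<theta>0 r0 t, RR \<theta>0 r0 t)) (snd (TH \<theta>0 r0 t, RR \<theta>0 r0 t)))) (at t within {0..})"
    unfolding fst_conv snd_conv G1 G2 by (rule has_vector_derivative_Pair[OF d1 d2])
qed

lemma traj_unique:
  assumes H: "ham_traj Hs (\<theta>0, r0) x" and t: "0 \<le> t"
  shows "snd (x t) $ i = r0 $ i - Rser \<theta>0 (r0 $ l) i t"
proof -
  have x0: "x 0 = (\<theta>0, r0)" using H unfolding ham_traj_def by simp
  have D: "\<And>u. 0 \<le> u \<Longrightarrow> (x has_vector_derivative
        (grad_r Hs (fst (x u)) (snd (x u)), - grad_theta Hs (fst (x u)) (snd (x u)))) (at u within {0..})"
    using H unfolding ham_traj_def by simp
  define s where "s = r0 $ l"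
  have rl: "snd (x u) $ l = s" if u: "0 \<le> u" for u
  proof -
    have "(\<lambda>u. snd (x u) $ l) u = (\<lambda>u. snd (x u) $ l) 0"
    proof (rule const_on_nonneg[OF _ u])
      fix v :: real assume v: "0 \<le> v"
      have "grad_theta Hs (fst (x v)) (snd (x v)) $ l = 0" by (simp add: grad_theta_Hs Kl)
      then show "((\<lambda>u. snd (x u) $ l) has_real_derivative 0) (at v within {0..})"
        using snd_comp_vd[OF D[OF v], of l] unfolding has_real_derivative_iff_has_vector_derivative by simp
    qed
    then show ?thesis using x0 unfolding s_def by simp
  qed
  have thx: "fst (x u) $ m = \<theta>0 $ m + \<omega> $ m * u" if u: "0 \<le> u" and m: "m \<noteq> l" for u m
  proof -
    have "(\<lambda>u. fst (x u) $ m - \<omega> $ m * u) u = (\<lambda>u. fst (x u) $ m - \<omega> $ m * u) 0"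
    proof (rule const_on_nonneg[OF _ u])
      fix v :: real assume v: "0 \<le> v"
      have g: "grad_r Hs (fst (x v)) (snd (x v)) $ m = \<omega> $ m" using m by (simp add: grad_r_Hs)
      have "((\<lambda>u. fst (x u) $ m) has_real_derivative \<omega> $ m) (at v within {0..})"
        using fst_comp_vd[OF D[OF v], of m] g unfolding has_real_derivative_iff_has_vector_derivative by simp
      then show "((\<lambda>u. fst (x u) $ m - \<omega> $ m * u) has_real_derivative 0) (at v within {0..})"
        by (auto intro!: derivative_eq_intros)
    qed
    then show ?thesis using x0 by simp
  qed
  have "(\<lambda>u. snd (x u) $ i + Rser \<theta>0 s i u) t = (\<lambda>u. snd (x u) $ i + Rser \<theta>0 s i u) 0"
  proof (rule const_on_nonneg[OF _ t])
    fix v :: real assume v: "0 \<le> v"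
    have ph: "phi j (fst (x v)) = phi j \<theta>0 + 2 * pi * lamj j * v" for j
      by (rule phi_traj) (use thx v in auto)
    have g: "grad_theta Hs (fst (x v)) (snd (x v)) $ i = (\<Sum>j. c j * s^(j+2) * (cos (phi j \<theta>0 + 2 * pi * lamj j * v) * (2 * pi * of_int (K j $ i))))"
      by (simp add: grad_theta_Hs rl[OF v] ph)
    have "((\<lambda>u. snd (x u) $ i) has_real_derivative - (\<Sum>j. c j * s^(j+2) * (cos (phi j \<theta>0 + 2 * pi * lamj j * v) * (2 * pi * of_int (K j $ i))))) (at v within {0..})"
      using snd_comp_vd[OF D[OF v], of i] g unfolding has_real_derivative_iff_has_vector_derivative by simp
    then show "((\<lambda>u. snd (x u) $ i + Rser \<theta>0 s i u) has_real_derivative 0) (at v within {0..})"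
      using has_field_derivative_at_within[OF Rser_deriv, of \<theta>0 s i v "{0..}"]
      by (auto intro!: derivative_eq_intros)
  qed
  then show ?thesis using x0 unfolding s_def by (simp add: Rser0)
qed

lemma orbit_props:
  assumes "r $ l \<noteq> 0"
  shows "(\<exists>x. ham_traj Hs (\<theta>, r) x) \<and> (\<forall>x. ham_traj Hs (\<theta>, r) x \<longrightarrow> (\<forall>B T. \<exists>t\<ge>T. norm (snd (x t)) > B))"
proof (intro conjI allI impI)
  show "\<exists>x. ham_traj Hs (\<theta>, r) x" using traj_ok by blast
  fix x B T assume H: "ham_traj Hs (\<theta>, r) x"
  obtain t i where t: "max T 0 \<le> t" and il: "i \<noteq> l" and b: "B < \<bar>r $ i - Rser \<theta> (r $ l) i t\<bar>"
    using unbounded[OF assms, of "max T 0" B r \<theta>] by blast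
  have "snd (x t) $ i = r $ i - Rser \<theta> (r $ l) i t" using traj_unique[OF H] t by simp
  then have "B < \<bar>snd (x t) $ i\<bar>" using b by simp
  also have "\<dots> \<le> norm (snd (x t))" by (rule component_le_norm_cart)
  finally show "\<exists>t\<ge>T. norm (snd (x t)) > B" using t by (intro exI[of _ t]) auto
qed

end

definition lamk :: "real^'n \<Rightarrow> int^'n \<Rightarrow> real" where
  "lamk \<omega> k = (\<Sum>i\<in>UNIV. of_int (k $ i) * \<omega> $ i)"

definition Good :: "real^'n \<Rightarrow> int^'n \<Rightarrow> nat \<Rightarrow> real \<Rightarrow> bool" where
  "Good \<omega> k m p \<longleftrightarrow> 1 \<le> nK k \<and> 0 < sqrt \<bar>lamk \<omega> k\<bar> \<and>
     sqrt \<bar>lamk \<omega> k\<bar> \<le> exp (-(real m+1) * (nK k + real m + 1)) \<and>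
     sqrt \<bar>lamk \<omega> k\<bar> * nK k \<le> p * exp (-(real m * (real m + 2))) \<and>
     sqrt \<bar>lamk \<omega> k\<bar> * exp (real m * (real m + 2)) * (1 + real m / p) \<le> 1"

lemma nK_nonneg: "0 \<le> nK k"
  using comp_le_nK[of k undefined] by linarith

lemma nK_int: "nK k = real_of_int (supnorm_int k)" unfolding nK_def ..

lemma good_from_bound:
  fixes M N L p :: real
  assumes M: "M = (real m+1)^2 + (real m+1) + real m * (real m + 2) + \<bar>ln p\<bar> + ln (1 + real m / p) + 1"
    and p: "0 < p" and N1: "1 \<le> N" and cc: "0 < cc" "cc \<le> exp (- M * N)"
  shows "cc \<le> exp (-(real m+1) * (N + real m + 1)) \<and> cc * N \<le> p * exp (-(real m * (real m + 2))) \<and>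
         cc * exp (real m * (real m + 2)) * (1 + real m / p) \<le> 1"
proof (intro conjI)
  have lp: "0 \<le> ln (1 + real m / p)" using p by simp
  have M0: "M \<ge> (real m+1)^2 + (real m+1)" using M lp by simp
  have Mm: "M - 1 \<ge> real m * (real m + 2) - ln p"
    using M lp abs_ge_minus_self[of "ln p"] zero_le_power2[of "real m + 1"] by linarith
  have Mm2: "M \<ge> real m * (real m + 2) + ln (1 + real m / p)" using M lp by simp
  show "cc \<le> exp (-(real m+1) * (N + real m + 1))"
  proof -
    have "(real m+1) * (N + real m + 1) = (real m+1) * N + (real m+1)^2 * 1" by (simp add: power2_eq_square algebra_simps)
    also have "\<dots> \<le> (real m+1) * N + (real m+1)^2 * N" using N1 by (intro add_left_mono mult_left_mono) auto
    also have "\<dots> = ((real m+1)^2 + (real m+1)) * N" by (simp add: algebra_simps)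
    also have "\<dots> \<le> M * N" using M0 N1 by (intro mult_right_mono) auto
    finally have "(real m+1) * (N + real m + 1) \<le> M * N" .
    then have "- M * N \<le> -(real m+1) * (N + real m + 1)" by (simp only: mult_minus_left neg_le_iff_le)
    then have "exp (- M * N) \<le> exp (-(real m+1) * (N + real m + 1))" by (simp only: exp_le_cancel_iff)
    then show ?thesis using cc(2) by linarith
  qed
  show "cc * N \<le> p * exp (-(real m * (real m + 2)))"
  proof -
    have NN: "N \<le> exp N" using exp_ge_add_one_self[of N] by linarith
    have "cc * N \<le> exp (- M * N) * exp N"
      using cc N1 NN by (intro mult_mono) auto
    also have "\<dots> = exp (- ((M - 1) * N))" by (simp add: exp_add[symmetric] algebra_simps)
    also have "\<dots> \<le> exp (- (M - 1))"
    proof -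
      have "M - 1 \<ge> 0" using M0 zero_le_power2[of "real m + 1"] by linarith
      then have "(M - 1) * 1 \<le> (M - 1) * N" using N1 by (intro mult_left_mono) auto
      then show ?thesis by simp
    qed
    also have "\<dots> \<le> exp (ln p - real m * (real m + 2))" using Mm by simp
    also have "\<dots> = p * exp (-(real m * (real m + 2)))" by (simp only: exp_diff exp_ln[OF p] exp_minus divide_inverse)
    finally show ?thesis .
  qed
  show "cc * exp (real m * (real m + 2)) * (1 + real m / p) \<le> 1"
  proof -
    have "M \<ge> 0" using M0 zero_le_power2[of "real m + 1"] by linarith
    then have "M * 1 \<le> M * N" using N1 by (intro mult_left_mono) auto
    then have "- M * N \<le> - M" by (simp only: mult_minus_left neg_le_iff_le mult_1_right)
    then have "exp (- M * N) \<le> exp (- M)" by (simp only: exp_le_cancel_iff)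
    then have c1: "cc \<le> exp (- M)" using cc(2) by linarith
    have pos: "0 < 1 + real m / p" using p by (simp add: add_pos_nonneg)
    have "cc * exp (real m * (real m + 2)) * (1 + real m / p) \<le> exp (- M) * exp (real m * (real m + 2)) * exp (ln (1 + real m / p))"
      using c1 pos by (intro mult_mono) auto
    also have "\<dots> = exp (- M + real m * (real m + 2) + ln (1 + real m / p))" by (simp only: exp_add)
    also have "\<dots> \<le> exp 0" using Mm2 by (subst exp_le_cancel_iff) linarith
    finally show ?thesis by simp
  qed
qed

lemma exists_good:
  fixes \<omega> :: "real^'n" and l :: 'n and kbar :: "nat \<Rightarrow> int^'n"
  assumes kl: "\<forall>j. kbar j $ l = 0"
    and lim: "filterlim (\<lambda>j. ln \<bar>\<Sum>i\<in>UNIV - {l}. of_int (kbar j $ i) * \<omega> $ i\<bar>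
                          / real_of_int (supnorm_int (kbar j))) at_bot sequentially"
    and p: "0 < p"
  shows "\<exists>j. Good \<omega> (kbar j) m p"
proof -
  define M where "M = (real m+1)^2 + (real m+1) + real m * (real m + 2) + \<bar>ln p\<bar> + ln (1 + real m / p) + 1"
  have lp: "0 \<le> ln (1 + real m / p)" using p by simp
  have mm: "0 \<le> real m * (real m + 2)" by simp
  have M1: "1 \<le> M" unfolding M_def using lp zero_le_power2[of "real m + 1"] mm abs_ge_zero[of "ln p"] by linarith
  have "eventually (\<lambda>j. ln \<bar>\<Sum>i\<in>UNIV - {l}. of_int (kbar j $ i) * \<omega> $ i\<bar>
                          / real_of_int (supnorm_int (kbar j)) \<le> - 2 * M) sequentially"
    using lim unfolding filterlim_at_bot by blast
  then obtain j where rj: "ln \<bar>\<Sum>i\<in>UNIV - {l}. of_int (kbar j $ i) * \<omega> $ i\<bar>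
                          / real_of_int (supnorm_int (kbar j)) \<le> - 2 * M"
    unfolding eventually_sequentially by blast
  define k where "k = kbar j"
  define L where "L = \<bar>lamk \<omega> k\<bar>"
  define N where "N = nK k"
  have sumeq: "lamk \<omega> k = (\<Sum>i\<in>UNIV - {l}. of_int (kbar j $ i) * \<omega> $ i)"
    unfolding lamk_def k_def using sum.remove[of UNIV l "\<lambda>i. of_int (kbar j $ i) * \<omega> $ i"] kl by simp
  have r: "ln L / N \<le> - 2 * M" using rj unfolding L_def N_def nK_def sumeq by (simp add: k_def)
  have N0: "N \<noteq> 0"
  proof
    assume "N = 0" then show False using r M1 by simp
  qed
  have Npos: "0 < N" using N0 nK_nonneg[of k] unfolding N_def by linarith
  have N1: "1 \<le> N"
  proof -
    have "0 < supnorm_int k" using Npos unfolding N_def nK_def by simp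
    then have "1 \<le> supnorm_int k" by simp
    then show ?thesis unfolding N_def nK_def by simp
  qed
  have lnL: "ln L \<le> - 2 * M * N" using r Npos by (simp add: pos_divide_le_eq)
  have Lpos: "0 < L"
  proof (rule ccontr)
    assume "\<not> 0 < L"
    then have "L = 0" unfolding L_def by simp
    moreover have "0 < M * N" using M1 Npos by simp
    ultimately show False using lnL by simp
  qed
  have cc0: "0 < sqrt L" using Lpos by simp
  have ccb: "sqrt L \<le> exp (- M * N)"
  proof -
    have "L \<le> exp (- 2 * M * N)" using lnL Lpos by (metis exp_le_cancel_iff exp_ln)
    also have "\<dots> = (exp (- M * N))^2" using exp_double[of "- M * N"] by (simp add: algebra_simps)
    finally have "sqrt L \<le> sqrt ((exp (- M * N))^2)" by (rule real_sqrt_le_mono)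
    then show ?thesis by simp
  qed
  have "sqrt L \<le> exp (-(real m+1) * (N + real m + 1)) \<and> sqrt L * N \<le> p * exp (-(real m * (real m + 2))) \<and>
         sqrt L * exp (real m * (real m + 2)) * (1 + real m / p) \<le> 1"
    by (rule good_from_bound[OF M_def p N1 cc0 ccb])
  then show ?thesis unfolding Good_def using N1 cc0 unfolding L_def N_def k_def by blast
qed

theorem theoremG:
  fixes \<omega> :: "real^'n" and l :: 'n and kbar :: "nat \<Rightarrow> int^'n"
  assumes "CARD('n) \<ge> 3"
    and "nonresonant \<omega>"
    and "\<forall>j. kbar j $ l = 0"
    and "filterlim (\<lambda>j. ln \<bar>\<Sum>i\<in>UNIV - {l}. of_int (kbar j $ i) * \<omega> $ i\<bar>
                          / real_of_int (supnorm_int (kbar j))) at_bot sequentially"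
  shows "\<exists>H. real_entire_ham H \<and>
     (\<exists>C \<delta>. \<delta> > 0 \<and> (\<forall>\<theta> r. norm r < \<delta> \<longrightarrow> \<bar>H \<theta> r - \<omega> \<bullet> r\<bar> \<le> C * (norm r)\<^sup>2)) \<and>
     (\<forall>\<theta> r. r $ l \<noteq> 0 \<longrightarrow>
        (\<exists>x. ham_traj H (\<theta>, r) x) \<and>
        (\<forall>x. ham_traj H (\<theta>, r) x \<longrightarrow> (\<forall>B T. \<exists>t\<ge>T. norm (snd (x t)) > B))) \<and>
     is_BNF H (\<lambda>r. \<omega> \<bullet> r)"
proof -
  define cc where "cc j = sqrt \<bar>lamk \<omega> (kbar j)\<bar>" for j
  have G: "\<And>m p. 0 < p \<Longrightarrow> \<exists>j. Good \<omega> (kbar j) m p"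
    using exists_good[OF assms(3) assms(4)] by blast
  have Gpos: "Good \<omega> (kbar j) m p \<Longrightarrow> 0 < cc j" for j m p unfolding Good_def cc_def by blast
  obtain f :: "nat \<Rightarrow> nat" where f: "\<And>n::nat. ((n = 0 \<longrightarrow> Good \<omega> (kbar (f n)) 0 1) \<and> 0 < cc (f n)) \<and>
      Good \<omega> (kbar (f (Suc n))) (Suc n) ((cc (f n))^2)"
  proof -
    have "\<exists>f::nat \<Rightarrow> nat. \<forall>n::nat. ((n = 0 \<longrightarrow> Good \<omega> (kbar (f n)) 0 1) \<and> 0 < cc (f n)) \<and>
      Good \<omega> (kbar (f (Suc n))) (Suc n) ((cc (f n))^2)"
    proof (rule dependent_nat_choice[where P="\<lambda>n x. (n = 0 \<longrightarrow> Good \<omega> (kbar x) 0 1) \<and> 0 < cc x"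
         and Q="\<lambda>n x y. Good \<omega> (kbar y) (Suc n) ((cc x)^2)"])
      show "\<exists>x. ((0::nat) = 0 \<longrightarrow> Good \<omega> (kbar x) 0 1) \<and> 0 < cc x"
        using G[of 1 0] Gpos by auto
      fix x and n :: nat assume "(n = 0 \<longrightarrow> Good \<omega> (kbar x) 0 1) \<and> 0 < cc x"
      then have "0 < (cc x)^2" by simp
      then obtain y where "Good \<omega> (kbar y) (Suc n) ((cc x)^2)" using G by blast
      then show "\<exists>y. ((Suc n = 0 \<longrightarrow> Good \<omega> (kbar y) 0 1) \<and> 0 < cc y) \<and> Good \<omega> (kbar y) (Suc n) ((cc x)^2)"
        using Gpos by auto
    qed
    then show ?thesis using that by blast
  qed
  define K where "K j = kbar (f j)" for j
  define c where "c j = cc (f j)" for j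
  have Gall: "Good \<omega> (K j) j (if j = 0 then 1 else (c (j-1))^2)" for j
  proof (cases j)
    case 0 then show ?thesis using f[of 0] unfolding K_def c_def by simp
  next
    case (Suc n) then show ?thesis using f[of n] unfolding K_def c_def by simp
  qed
  have ceq: "c j = sqrt \<bar>lamk \<omega> (K j)\<bar>" for j unfolding c_def cc_def K_def ..
  interpret cfg \<omega> l K c
  proof
    fix j
    show "K j $ l = 0" unfolding K_def using assms(3) by simp
    show "1 \<le> nK (K j)" using Gall[of j] unfolding Good_def by blast
    show "0 < c j" using Gall[of j] unfolding Good_def ceq by blast
    show "\<bar>\<Sum>i\<in>UNIV. of_int (K j $ i) * \<omega> $ i\<bar> = (c j)^2" unfolding ceq lamk_def by simp
    show "c j \<le> exp (-(real j+1) * (nK (K j) + real j + 1))" using Gall[of j] unfolding Good_def ceq by blast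
    show "c j * nK (K j) \<le> (if j = 0 then 1 else (c (j-1))^2) * exp (-(real j * (real j + 2)))"
      using Gall[of j] unfolding Good_def ceq[of j] by blast
    show "c j * exp (real j * (real j + 2)) * (1 + real j / (if j = 0 then 1 else (c (j-1))^2)) \<le> 1"
      using Gall[of j] unfolding Good_def ceq[of j] by blast
  qed
  show ?thesis
    using real_entire Hs_quad orbit_props is_BNF_Hs by blast
qed

end
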